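(* If $G$ is a prime $\{P_5,\overline{P_5},C_5,\text{bull}\}$-free graph, then either $G$ or $\overline{G}$ is a half graph.
   Context: All graphs are finite and simple. $P_n$ is the path on $n$ vertices, $C_n$ the cycle of length $n$, $\overline{G}$ the complement. $G$ is $\mathcal F$-free if it has no induced subgraph isomorphic to a member of $\mathcal F$. The bull is the graph with vertex set $\{x_1,x_2,x_3,y,z\}$ and edge set $\{x_1x_2,x_2x_3,x_1x_3,x_1y,x_2z\}$. A vertex $b\notin X$ is mixed on $X$ if it has both a neighbor and a non-neighbor in $X$. A homogeneous set is a set $X\subseteq V(G)$ with $1<|X|<|V(G)|$ such that no vertex outside $X$ is mixed on $X$. $G$ is prime if $|V(G)|\ge4$ and has no homogeneous set. For $k\ge1$, $O_k$ is the bipartite graph with vertex set $\{a_1,\dots,a_k,b_1,\dots,b_k\}$ in which the only edges are $a_ib_j$ for $i+j\ge k+1$; a half graph is a graph isomorphic to $O_k$ for some $k$. *)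

theory Defs
  imports Main
begin

definition graph :: "'a set \<Rightarrow> ('a \<Rightarrow> 'a \<Rightarrow> bool) \<Rightarrow> bool" where
  "graph V E \<longleftrightarrow> finite V \<and> (\<forall>x y. E x y \<longrightarrow> x \<in> V \<and> y \<in> V) \<and>
     (\<forall>x y. E x y \<longrightarrow> E y x) \<and> (\<forall>x. \<not> E x x)"

definition compl_edges :: "'a set \<Rightarrow> ('a \<Rightarrow> 'a \<Rightarrow> bool) \<Rightarrow> 'a \<Rightarrow> 'a \<Rightarrow> bool" where
  "compl_edges V E x y \<longleftrightarrow> x \<in> V \<and> y \<in> V \<and> x \<noteq> y \<and> \<not> E x y"

definition graph_iso :: "'b set \<Rightarrow> ('b \<Rightarrow> 'b \<Rightarrow> bool) \<Rightarrow> 'a set \<Rightarrow> ('a \<Rightarrow> 'a \<Rightarrow> bool)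
    \<Rightarrow> ('b \<Rightarrow> 'a) \<Rightarrow> bool" where
  "graph_iso W F V E f \<longleftrightarrow> bij_betw f W V \<and>
     (\<forall>x\<in>W. \<forall>y\<in>W. F x y \<longleftrightarrow> E (f x) (f y))"

definition has_induced :: "'a set \<Rightarrow> ('a \<Rightarrow> 'a \<Rightarrow> bool) \<Rightarrow> 'b set \<Rightarrow> ('b \<Rightarrow> 'b \<Rightarrow> bool) \<Rightarrow> bool" where
  "has_induced V E W F \<longleftrightarrow> (\<exists>U. U \<subseteq> V \<and> (\<exists>f. graph_iso W F U E f))"

definition P5_edges :: "nat \<Rightarrow> nat \<Rightarrow> bool" where
  "P5_edges i j \<longleftrightarrow> i \<le> 4 \<and> j \<le> 4 \<and> (i = j + 1 \<or> j = i + 1)"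

definition C5_edges :: "nat \<Rightarrow> nat \<Rightarrow> bool" where
  "C5_edges i j \<longleftrightarrow> P5_edges i j \<or> (i = 0 \<and> j = 4) \<or> (i = 4 \<and> j = 0)"

text \<open>Bull: x1=0, x2=1, x3=2, y=3, z=4; edges x1x2, x2x3, x1x3, x1y, x2z.\<close>
definition bull_edges :: "nat \<Rightarrow> nat \<Rightarrow> bool" where
  "bull_edges i j \<longleftrightarrow> {i, j} \<in> {{0,1}, {1,2}, {0,2}, {0,3}, {1,4}}"

definition F5 :: "nat set" where "F5 = {0..4}"

definition free_P5_coP5_C5_bull :: "'a set \<Rightarrow> ('a \<Rightarrow> 'a \<Rightarrow> bool) \<Rightarrow> bool" where
  "free_P5_coP5_C5_bull V E \<longleftrightarrow>
     \<not> has_induced V E F5 P5_edges \<and>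
     \<not> has_induced V E F5 (compl_edges F5 P5_edges) \<and>
     \<not> has_induced V E F5 C5_edges \<and>
     \<not> has_induced V E F5 bull_edges"

definition mixed :: "('a \<Rightarrow> 'a \<Rightarrow> bool) \<Rightarrow> 'a \<Rightarrow> 'a set \<Rightarrow> bool" where
  "mixed E b X \<longleftrightarrow> b \<notin> X \<and> (\<exists>x\<in>X. E b x) \<and> (\<exists>x\<in>X. \<not> E b x)"

definition homogeneous :: "'a set \<Rightarrow> ('a \<Rightarrow> 'a \<Rightarrow> bool) \<Rightarrow> 'a set \<Rightarrow> bool" where
  "homogeneous V E X \<longleftrightarrow> X \<subseteq> V \<and> 1 < card X \<and> card X < card V \<and>
     (\<forall>b\<in>V - X. \<not> mixed E b X)"

definition prime_graph :: "'a set \<Rightarrow> ('a \<Rightarrow> 'a \<Rightarrow> bool) \<Rightarrow> bool" where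
  "prime_graph V E \<longleftrightarrow> card V \<ge> 4 \<and> (\<nexists>X. homogeneous V E X)"

text \<open>Half graph O_k: vertices a_i = Inl i, b_j = Inr j (1 \<le> i, j \<le> k);
edges exactly a_i b_j with i + j \<ge> k + 1.\<close>
definition O_verts :: "nat \<Rightarrow> (nat + nat) set" where
  "O_verts k = Inl ` {1..k} \<union> Inr ` {1..k}"

definition O_edges :: "nat \<Rightarrow> nat + nat \<Rightarrow> nat + nat \<Rightarrow> bool" where
  "O_edges k u v \<longleftrightarrow> u \<in> O_verts k \<and> v \<in> O_verts k \<and>
     (\<exists>i j. ((u = Inl i \<and> v = Inr j) \<or> (u = Inr j \<and> v = Inl i)) \<and> i + j \<ge> k + 1)"

definition half_graph :: "'a set \<Rightarrow> ('a \<Rightarrow> 'a \<Rightarrow> bool) \<Rightarrow> bool" where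
  "half_graph V E \<longleftrightarrow> (\<exists>k\<ge>1. \<exists>f. graph_iso (O_verts k) (O_edges k) V E f)"

end

theory Submission
  imports Defs
begin


lemma graphD:
  assumes "graph V E"
  shows "finite V" "E x y \<Longrightarrow> x \<in> V" "E x y \<Longrightarrow> y \<in> V" "E x y \<Longrightarrow> E y x" "\<not> E x x"
  using assms unfolding graph_def by auto

lemma F5_eq: "F5 = {0,1,2,3,4}" unfolding F5_def by auto

lemma has_induced_5:
  assumes "{v0,v1,v2,v3,v4} \<subseteq> V" "distinct [v0,v1,v2,v3,v4]"
    and "\<forall>i\<in>F5. \<forall>j\<in>F5. F i j \<longleftrightarrow> E ([v0,v1,v2,v3,v4]!i) ([v0,v1,v2,v3,v4]!j)"
  shows "has_induced V E F5 F"
proof -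
  let ?l = "[v0,v1,v2,v3,v4]"
  define f where "f = (\<lambda>i. ?l ! i)"
  have "bij_betw f F5 {v0,v1,v2,v3,v4}"
    unfolding bij_betw_def
  proof
    show "inj_on f F5" unfolding inj_on_def f_def F5_eq
      using assms(2) by auto
    show "f ` F5 = {v0,v1,v2,v3,v4}" unfolding f_def F5_eq by auto
  qed
  moreover have "\<forall>x\<in>F5. \<forall>y\<in>F5. F x y \<longleftrightarrow> E (f x) (f y)" using assms(3) unfolding f_def by auto
  ultimately show ?thesis unfolding has_induced_def graph_iso_def using assms(1) by blast
qed

locale fgraph =
  fixes V :: "'a set" and E :: "'a \<Rightarrow> 'a \<Rightarrow> bool"
  assumes gr: "graph V E" and fr: "free_P5_coP5_C5_bull V E"
begin

lemma Esym: "E x y \<Longrightarrow> E y x" using graphD[OF gr] by blast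
lemma Eirr[simp]: "\<not> E x x" using graphD[OF gr] by blast
lemma EV1: "E x y \<Longrightarrow> x \<in> V" using graphD[OF gr] by blast
lemma EV2: "E x y \<Longrightarrow> y \<in> V" using graphD[OF gr] by blast
lemma Ecomm: "E x y \<longleftrightarrow> E y x" using Esym by blast
lemma nEsym: "\<not> E x y \<Longrightarrow> \<not> E y x" using Esym by blast
lemma finV: "finite V" using graphD[OF gr] by blast

lemma no_P5:
  assumes "v0 \<in> V" "v1 \<in> V" "v2 \<in> V" "v3 \<in> V" "v4 \<in> V" "distinct [v0,v1,v2,v3,v4]"
    and "E v0 v1" "E v1 v2" "E v2 v3" "E v3 v4"
    and "\<not>E v0 v2" "\<not>E v0 v3" "\<not>E v0 v4" "\<not>E v1 v3" "\<not>E v1 v4" "\<not>E v2 v4"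
  shows False
proof -
  have "has_induced V E F5 P5_edges"
    apply (rule has_induced_5[of v0 v1 v2 v3 v4])
    using assms apply simp
    using assms apply simp
    unfolding F5_eq P5_edges_def using assms assms(7-10)[THEN Esym] assms(11-16)[THEN nEsym] by auto
  thus False using fr unfolding free_P5_coP5_C5_bull_def by blast
qed

lemma no_coP5:
  assumes "v0 \<in> V" "v1 \<in> V" "v2 \<in> V" "v3 \<in> V" "v4 \<in> V" "distinct [v0,v1,v2,v3,v4]"
    and "\<not>E v0 v1" "\<not>E v1 v2" "\<not>E v2 v3" "\<not>E v3 v4"
    and "E v0 v2" "E v0 v3" "E v0 v4" "E v1 v3" "E v1 v4" "E v2 v4"
  shows False
proof -
  have "has_induced V E F5 (compl_edges F5 P5_edges)"
    apply (rule has_induced_5[of v0 v1 v2 v3 v4])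
    using assms apply simp
    using assms apply simp
    unfolding F5_eq P5_edges_def compl_edges_def using assms assms(7-10)[THEN nEsym] assms(11-16)[THEN Esym] by auto
  thus False using fr unfolding free_P5_coP5_C5_bull_def by blast
qed

lemma no_C5:
  assumes "v0 \<in> V" "v1 \<in> V" "v2 \<in> V" "v3 \<in> V" "v4 \<in> V" "distinct [v0,v1,v2,v3,v4]"
    and "E v0 v1" "E v1 v2" "E v2 v3" "E v3 v4" "E v4 v0"
    and "\<not>E v0 v2" "\<not>E v0 v3" "\<not>E v1 v3" "\<not>E v1 v4" "\<not>E v2 v4"
  shows False
proof -
  have "has_induced V E F5 C5_edges"
    apply (rule has_induced_5[of v0 v1 v2 v3 v4])
    using assms apply simp
    using assms apply simp
    unfolding F5_eq C5_edges_def P5_edges_def using assms assms(7-11)[THEN Esym] assms(12-16)[THEN nEsym] by auto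
  thus False using fr unfolding free_P5_coP5_C5_bull_def by blast
qed

lemma no_bull:
  assumes "v0 \<in> V" "v1 \<in> V" "v2 \<in> V" "v3 \<in> V" "v4 \<in> V" "distinct [v0,v1,v2,v3,v4]"
    and "E v0 v1" "E v1 v2" "E v0 v2" "E v0 v3" "E v1 v4"
    and "\<not>E v0 v4" "\<not>E v1 v3" "\<not>E v2 v3" "\<not>E v2 v4" "\<not>E v3 v4"
  shows False
proof -
  have "has_induced V E F5 bull_edges"
    apply (rule has_induced_5[of v0 v1 v2 v3 v4])
    using assms apply simp
    using assms apply simp
    unfolding F5_eq bull_edges_def using assms assms(7-11)[THEN Esym] assms(12-16)[THEN nEsym]
    by (auto simp: insert_commute doubleton_eq_iff)
  thus False using fr unfolding free_P5_coP5_C5_bull_def by blast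
qed

lemma no_house:
  assumes "r \<in> V" "s1 \<in> V" "s2 \<in> V" "s3 \<in> V" "s4 \<in> V" "distinct [r,s1,s2,s3,s4]"
    and "E s1 s2" "E s2 s3" "E s3 s4" "E s4 s1" "E r s1" "E r s2"
    and "\<not>E r s3" "\<not>E r s4" "\<not>E s1 s3" "\<not>E s2 s4"
  shows False
  by (rule no_coP5[of s1 s3 r s4 s2]) (use assms in \<open>auto simp: Ecomm\<close>)

end


lemma has_inducedD:
  assumes "has_induced V E F5 F"
  obtains v where "\<And>i. i \<in> F5 \<Longrightarrow> v i \<in> V" "inj_on v F5"
    "\<And>i j. i \<in> F5 \<Longrightarrow> j \<in> F5 \<Longrightarrow> F i j \<longleftrightarrow> E (v i) (v j)"
proof -
  from assms obtain U f where U: "U \<subseteq> V" and iso: "graph_iso F5 F U E f"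
    unfolding has_induced_def by blast
  from iso have b: "bij_betw f F5 U" and e: "\<forall>x\<in>F5. \<forall>y\<in>F5. F x y \<longleftrightarrow> E (f x) (f y)"
    unfolding graph_iso_def by auto
  show ?thesis
    apply (rule that[of f])
    using b U e unfolding bij_betw_def by auto
qed

lemma inj_F5_distinct: "inj_on v F5 \<Longrightarrow> distinct [v 0, v 1, v 2, v 3, v 4]"
  unfolding inj_on_def F5_eq by auto

lemma prime_no_hom:
  assumes "prime_graph V E" "graph V E" "X \<subseteq> V" "2 \<le> card X" "X \<noteq> V"
    and "\<And>b. b \<in> V - X \<Longrightarrow> (\<forall>x\<in>X. E b x) \<or> (\<forall>x\<in>X. \<not> E b x)"
  shows False
proof -
  have fin: "finite V" using assms(2) graphD by blast
  have "card X < card V" using assms(3,5) fin by (meson psubsetI psubset_card_mono)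
  hence "homogeneous V E X" unfolding homogeneous_def mixed_def using assms(3,4,6) by fastforce
  thus False using assms(1) unfolding prime_graph_def by blast
qed

lemma compl_graph: "graph V E \<Longrightarrow> graph V (compl_edges V E)"
  unfolding graph_def compl_edges_def by auto

lemma compl_compl: "graph V E \<Longrightarrow> compl_edges V (compl_edges V E) = E"
  unfolding graph_def compl_edges_def by (intro ext) auto

lemma compl_prime:
  assumes "graph V E" "prime_graph V E" shows "prime_graph V (compl_edges V E)"
proof -
  have "homogeneous V E X" if "homogeneous V (compl_edges V E) X" for X
    using that unfolding homogeneous_def mixed_def compl_edges_def by fastforce
  thus ?thesis using assms(2) unfolding prime_graph_def by blast
qed

context fgraph begin

lemma compl_free: "free_P5_coP5_C5_bull V (compl_edges V E)"
proof -
  let ?C = "compl_edges V E"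
  have cE: "?C x y \<longleftrightarrow> \<not> E x y" if "x \<in> V" "y \<in> V" "x \<noteq> y" for x y
    using that unfolding compl_edges_def by auto
  have ext: "\<exists>v. (\<forall>i\<in>F5. v i \<in> V) \<and> distinct [v 0, v 1, v 2, v 3, v 4] \<and>
        (\<forall>i\<in>F5. \<forall>j\<in>F5. i \<noteq> j \<longrightarrow> (F i j \<longleftrightarrow> \<not> E (v i) (v j)))"
    if hF: "has_induced V ?C F5 F" for F
  proof -
    obtain v where v: "\<And>i. i \<in> F5 \<Longrightarrow> v i \<in> V" "inj_on v F5"
      "\<And>i j. i \<in> F5 \<Longrightarrow> j \<in> F5 \<Longrightarrow> F i j \<longleftrightarrow> ?C (v i) (v j)"
      using has_inducedD[OF hF] by metis
    show ?thesis
      apply (rule exI[of _ v])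
      using v(1,3) inj_F5_distinct[OF v(2)] v(2) unfolding inj_on_def
      by (auto simp: compl_edges_def)
  qed
  have 1: False if hh: "has_induced V ?C F5 P5_edges"
  proof -
    obtain v where v: "\<forall>i\<in>F5. v i \<in> V" "distinct [v 0, v 1, v 2, v 3, v 4]"
      "\<forall>i\<in>F5. \<forall>j\<in>F5. i \<noteq> j \<longrightarrow> (P5_edges i j \<longleftrightarrow> \<not> E (v i) (v j))"
      using ext[OF hh] by blast
    show False
      apply (rule no_coP5[of "v 0" "v 1" "v 2" "v 3" "v 4"])
      using v unfolding F5_eq P5_edges_def by auto
  qed
  have 2: False if hh: "has_induced V ?C F5 (compl_edges F5 P5_edges)"
  proof -
    obtain v where v: "\<forall>i\<in>F5. v i \<in> V" "distinct [v 0, v 1, v 2, v 3, v 4]"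
      "\<forall>i\<in>F5. \<forall>j\<in>F5. i \<noteq> j \<longrightarrow> (compl_edges F5 P5_edges i j \<longleftrightarrow> \<not> E (v i) (v j))"
      using ext[OF hh] by blast
    show False
      apply (rule no_P5[of "v 0" "v 1" "v 2" "v 3" "v 4"])
      using v unfolding F5_eq P5_edges_def compl_edges_def by auto
  qed
  have 3: False if hh: "has_induced V ?C F5 C5_edges"
  proof -
    obtain v where v: "\<forall>i\<in>F5. v i \<in> V" "distinct [v 0, v 1, v 2, v 3, v 4]"
      "\<forall>i\<in>F5. \<forall>j\<in>F5. i \<noteq> j \<longrightarrow> (C5_edges i j \<longleftrightarrow> \<not> E (v i) (v j))"
      using ext[OF hh] by blast
    show False
      apply (rule no_C5[of "v 0" "v 2" "v 4" "v 1" "v 3"])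
      using v unfolding F5_eq C5_edges_def P5_edges_def by auto
  qed
  have 4: False if hh: "has_induced V ?C F5 bull_edges"
  proof -
    obtain v where v: "\<forall>i\<in>F5. v i \<in> V" "distinct [v 0, v 1, v 2, v 3, v 4]"
      "\<forall>i\<in>F5. \<forall>j\<in>F5. i \<noteq> j \<longrightarrow> (bull_edges i j \<longleftrightarrow> \<not> E (v i) (v j))"
      using ext[OF hh] by blast
    show False
      apply (rule no_bull[of "v 4" "v 3" "v 2" "v 0" "v 1"])
      using v unfolding F5_eq bull_edges_def by (auto simp: insert_commute doubleton_eq_iff)
  qed
  show ?thesis unfolding free_P5_coP5_C5_bull_def using 1 2 3 4 by blast
qed

lemma compl_fgraph: "fgraph V (compl_edges V E)"
  using compl_graph[OF gr] compl_free unfolding fgraph_def by blast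

end


definition p4 :: "'a set \<Rightarrow> ('a \<Rightarrow> 'a \<Rightarrow> bool) \<Rightarrow> 'a \<Rightarrow> 'a \<Rightarrow> 'a \<Rightarrow> 'a \<Rightarrow> bool" where
  "p4 V E w1 w2 w3 w4 \<longleftrightarrow> w1 \<in> V \<and> w2 \<in> V \<and> w3 \<in> V \<and> w4 \<in> V \<and> distinct [w1,w2,w3,w4] \<and>
     E w1 w2 \<and> E w2 w3 \<and> E w3 w4 \<and> \<not> E w1 w3 \<and> \<not> E w1 w4 \<and> \<not> E w2 w4"

lemma nonnbr_stable:
  assumes gr: "graph V E" and pr: "prime_graph V E"
    and np4: "\<And>w1 w2 w3 w4. \<not> p4 V E w1 w2 w3 w4"
    and v: "v \<in> V" and p: "p \<in> V" "p \<noteq> v" "\<not> E v p" and q: "q \<in> V" "q \<noteq> v" "\<not> E v q"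
  shows "\<not> E p q"
proof
  assume pq: "E p q"
  have Es: "E x y \<Longrightarrow> E y x" for x y using gr graphD by metis
  have Ei: "\<not> E x x" for x using gr graphD by metis
  have fin: "finite V" using gr graphD by metis
  define A where "A = {u\<in>V. E v u}"
  define B where "B = {u\<in>V. u \<noteq> v \<and> \<not> E v u}"
  have step1: "E u x \<longleftrightarrow> E u y" if "x \<in> B" "y \<in> B" "E x y" "u \<in> A" for x y u
  proof
    assume "E u x"
    show "E u y"
    proof (rule ccontr)
      assume "\<not> E u y"
      have "p4 V E v u x y" unfolding p4_def using that \<open>E u x\<close> \<open>\<not> E u y\<close> Ei v
        unfolding A_def B_def by auto
      thus False using np4 by blast
    qed
  next
    assume "E u y"
    show "E u x"
    proof (rule ccontr)
      assume "\<not> E u x"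
      have "p4 V E v u y x" unfolding p4_def using that \<open>E u y\<close> \<open>\<not> E u x\<close> Ei Es v
        unfolding A_def B_def by auto
      thus False using np4 by blast
    qed
  qed
  define C where "C = {x\<in>B. \<forall>u\<in>A. E u x \<longleftrightarrow> E u p}"
  have pB: "p \<in> B" "q \<in> B" using p q unfolding B_def by auto
  have "p \<in> C" unfolding C_def using pB by auto
  moreover have "q \<in> C" unfolding C_def using pB step1[OF pB(1) pB(2) pq] by auto
  moreover have "p \<noteq> q" using pq Ei by auto
  ultimately have c2: "2 \<le> card C"
  proof -
    have "{p,q} \<subseteq> C" using \<open>p \<in> C\<close> \<open>q \<in> C\<close> by auto
    moreover have "finite C" using fin unfolding C_def B_def by auto
    ultimately show ?thesis using \<open>p \<noteq> q\<close> by (metis card_2_iff card_mono)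
  qed
  show False
  proof (rule prime_no_hom[OF pr gr _ c2])
    show "C \<subseteq> V" unfolding C_def B_def by auto
    show "C \<noteq> V" using v unfolding C_def B_def by auto
    fix b assume b: "b \<in> V - C"
    show "(\<forall>x\<in>C. E b x) \<or> (\<forall>x\<in>C. \<not> E b x)"
    proof (cases "b = v")
      case True thus ?thesis unfolding C_def B_def by auto
    next
      case bv: False
      show ?thesis
      proof (cases "E v b")
        case True
        hence "b \<in> A" using b unfolding A_def by auto
        thus ?thesis unfolding C_def by auto
      next
        case False
        hence bB: "b \<in> B" using b bv unfolding B_def by auto
        have "\<not> E b x" if "x \<in> C" for x
        proof
          assume "E b x"
          have "x \<in> B" using that unfolding C_def by auto
          have "\<forall>u\<in>A. E u b \<longleftrightarrow> E u p" using step1[OF bB \<open>x \<in> B\<close> \<open>E b x\<close>] that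
            unfolding C_def by auto
          hence "b \<in> C" using bB unfolding C_def by auto
          thus False using b by auto
        qed
        thus ?thesis by auto
      qed
    qed
  qed
qed

lemma p4_compl:
  assumes "p4 V (compl_edges V E) w1 w2 w3 w4" "graph V E"
  shows "p4 V E w2 w4 w1 w3"
  using assms unfolding p4_def compl_edges_def graph_def by auto

lemma prime_has_p4:
  assumes gr: "graph V E" and pr: "prime_graph V E"
  shows "\<exists>w1 w2 w3 w4. p4 V E w1 w2 w3 w4"
proof (rule ccontr)
  assume "\<not> ?thesis"
  hence np4: "\<And>w1 w2 w3 w4. \<not> p4 V E w1 w2 w3 w4" by blast
  have Es: "E x y \<Longrightarrow> E y x" for x y using gr graphD by metis
  have Ei: "\<not> E x x" for x using gr graphD by metis
  have EV: "E x y \<Longrightarrow> x \<in> V" "E x y \<Longrightarrow> y \<in> V" for x y using gr graphD by metis+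
  have fin: "finite V" using gr graphD by metis
  have cV: "4 \<le> card V" using pr unfolding prime_graph_def by auto
  hence "V \<noteq> {}" by auto
  then obtain v where v: "v \<in> V" by auto
  have grc: "graph V (compl_edges V E)" using compl_graph[OF gr] .
  have prc: "prime_graph V (compl_edges V E)" using compl_prime[OF gr pr] .
  have np4c: "\<And>w1 w2 w3 w4. \<not> p4 V (compl_edges V E) w1 w2 w3 w4"
    using p4_compl[OF _ gr] np4 by blast
  have clique: "E x y" if "x \<in> V" "y \<in> V" "E v x" "E v y" "x \<noteq> y" for x y
  proof -
    have "\<not> compl_edges V E x y"
      apply (rule nonnbr_stable[OF grc prc np4c v])
      using that Ei v unfolding compl_edges_def by auto
    thus ?thesis using that unfolding compl_edges_def by auto
  qed
  have stable: "\<not> E x y" if "x \<in> V" "y \<in> V" "x \<noteq> v" "y \<noteq> v" "\<not> E v x" "\<not> E v y" for x y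
    using nonnbr_stable[OF gr pr np4 v] that by blast
  define A where "A = {u\<in>V. E v u}"
  define B where "B = {u\<in>V. u \<noteq> v \<and> \<not> E v u}"
  have finA: "finite A" and finB: "finite B" using fin unfolding A_def B_def by auto
  have Bne: "B \<noteq> {}"
  proof
    assume B0: "B = {}"
    show False
    proof (rule prime_no_hom[OF pr gr, of "V - {v}"])
      show "V - {v} \<subseteq> V" by auto
      show "2 \<le> card (V - {v})" using cV v fin by auto
      show "V - {v} \<noteq> V" using v by auto
      fix b assume "b \<in> V - (V - {v})"
      hence "b = v" by auto
      have "E v x" if "x \<in> V - {v}" for x using B0 that unfolding B_def by auto
      thus "(\<forall>x\<in>V - {v}. E b x) \<or> (\<forall>x\<in>V - {v}. \<not> E b x)" using \<open>b = v\<close> by auto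
    qed
  qed
  define N where "N x = {u\<in>A. E u x}" for x
  have nested: "N p \<subseteq> N q \<or> N q \<subseteq> N p" if "p \<in> B" "q \<in> B" for p q
  proof (rule ccontr)
    assume "\<not> ?thesis"
    then obtain x y where x: "x \<in> N p" "x \<notin> N q" and y: "y \<in> N q" "y \<notin> N p" by blast
    have xA: "x \<in> A" "y \<in> A" using x y unfolding N_def by auto
    have "x \<noteq> y" using x y by auto
    have "E x y" using clique xA \<open>x \<noteq> y\<close> unfolding A_def by auto
    have "p \<noteq> q" using x by auto
    have "p4 V E p x y q" unfolding p4_def
      using that x y xA \<open>E x y\<close> stable[of p q] Es Ei \<open>p \<noteq> q\<close> unfolding N_def A_def B_def
      by auto
    thus False using np4 by blast
  qed
  define W where "W = insert v {u\<in>A. \<forall>p\<in>B. \<not> E u p}"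
  have Wv: "W = {v}"
  proof (rule ccontr)
    assume "W \<noteq> {v}"
    then obtain u where u: "u \<in> W" "u \<noteq> v" unfolding W_def by auto
    have "card {v,u} = 2" using u by auto
    moreover have "{v,u} \<subseteq> W" using u unfolding W_def by auto
    moreover have "finite W" using finA unfolding W_def by auto
    ultimately have c2: "2 \<le> card W" by (metis card_mono)
    show False
    proof (rule prime_no_hom[OF pr gr _ c2])
      show "W \<subseteq> V" using v unfolding W_def A_def by auto
      show "W \<noteq> V" using Bne unfolding W_def A_def B_def by auto
      fix b assume b: "b \<in> V - W"
      show "(\<forall>x\<in>W. E b x) \<or> (\<forall>x\<in>W. \<not> E b x)"
      proof (cases "E v b")
        case True
        have "E b x" if "x \<in> W" for x
        proof (cases "x = v")
          case True thus ?thesis using \<open>E v b\<close> Es by auto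
        next
          case False
          hence "x \<in> A" using that unfolding W_def by auto
          thus ?thesis using clique[of b x] b \<open>E v b\<close> that unfolding A_def by auto
        qed
        thus ?thesis by auto
      next
        case False
        hence "b \<in> B" using b unfolding B_def W_def by auto
        have "\<not> E b x" if "x \<in> W" for x
          using that \<open>b \<in> B\<close> False Es unfolding W_def by auto
        thus ?thesis by auto
      qed
    qed
  qed
  have "Max ((\<lambda>x. card (N x)) ` B) \<in> (\<lambda>x. card (N x)) ` B"
    using Max_in[of "(\<lambda>x. card (N x)) ` B"] finB Bne by auto
  then obtain p where pB: "p \<in> B" and pmax: "card (N p) = Max ((\<lambda>x. card (N x)) ` B)"
    by auto
  have allA: "E u p" if "u \<in> A" for u
  proof -
    have "u \<notin> W - {v}" using Wv by auto
    hence "\<exists>q\<in>B. E u q" using that Ei unfolding W_def A_def by auto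
    then obtain q where q: "q \<in> B" "E u q" by auto
    have cq: "card (N q) \<le> card (N p)" using pmax q finB by auto
    have "finite (N p)" "finite (N q)" using finA unfolding N_def by auto
    have "N q \<subseteq> N p"
      using nested[OF pB q(1)] cq \<open>finite (N p)\<close> \<open>finite (N q)\<close> by (metis card_seteq)
    thus ?thesis using q that unfolding N_def by auto
  qed
  have pv: "p \<noteq> v" "p \<in> V" "\<not> E v p" using pB unfolding B_def by auto
  show False
  proof (rule prime_no_hom[OF pr gr, of "{v,p}"])
    show "{v,p} \<subseteq> V" using pv v by auto
    show "2 \<le> card {v,p}" using pv by auto
    show "{v,p} \<noteq> V"
    proof
      assume "{v,p} = V"
      have "card {v,p} \<le> 2" by (simp add: card_insert_if)
      hence "card V \<le> 2" using \<open>{v,p} = V\<close> by simp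
      thus False using cV by auto
    qed
    fix b assume b: "b \<in> V - {v,p}"
    show "(\<forall>x\<in>{v,p}. E b x) \<or> (\<forall>x\<in>{v,p}. \<not> E b x)"
    proof (cases "E v b")
      case True
      hence "b \<in> A" using b unfolding A_def by auto
      thus ?thesis using allA True Es by auto
    next
      case False
      thus ?thesis using stable[of b p] b pv Es by auto
    qed
  qed
qed


lemma S_comb:
  fixes p q :: "nat \<Rightarrow> bool" and k :: nat
  assumes G1: "\<And>x u v y. 1 \<le> x \<Longrightarrow> x \<le> u \<Longrightarrow> u < v \<Longrightarrow> v \<le> y \<Longrightarrow> y \<le> k \<Longrightarrow> p u \<or> q v \<Longrightarrow> q x \<or> p y"
    and G2: "\<And>x u v y. 1 \<le> x \<Longrightarrow> x \<le> u \<Longrightarrow> u < v \<Longrightarrow> v \<le> y \<Longrightarrow> y \<le> k \<Longrightarrow> p u \<Longrightarrow> q v \<Longrightarrow> q x \<and> p y"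
    and G3: "\<And>x u v y. 1 \<le> x \<Longrightarrow> x \<le> u \<Longrightarrow> u < v \<Longrightarrow> v \<le> y \<Longrightarrow> y \<le> k \<Longrightarrow> q x \<Longrightarrow> p y \<Longrightarrow> p u \<or> q v"
    and Ba: "\<And>U V V' W. 1 \<le> U \<Longrightarrow> U \<le> V \<Longrightarrow> U \<le> V' \<Longrightarrow> V' < W \<Longrightarrow> V < W \<Longrightarrow> W \<le> k \<Longrightarrow>
              q U \<Longrightarrow> p V \<Longrightarrow> \<not> p V' \<Longrightarrow> q W \<Longrightarrow> False"
    and Bb: "\<And>Y V V' U. 1 \<le> U \<Longrightarrow> U < V \<Longrightarrow> U < V' \<Longrightarrow> V \<le> Y \<Longrightarrow> V' \<le> Y \<Longrightarrow> Y \<le> k \<Longrightarrow>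
              p Y \<Longrightarrow> q V \<Longrightarrow> \<not> q V' \<Longrightarrow> p U \<Longrightarrow> False"
  shows "(\<forall>u\<in>{1..k}. \<not> p u \<and> \<not> q u) \<or> (\<forall>u\<in>{1..k}. p u \<and> q u) \<or>
         (\<exists>t\<in>{1..k}. \<forall>u\<in>{1..k}. (p u \<longrightarrow> u = t) \<and> (q u \<longleftrightarrow> u \<le> t)) \<or>
         (\<exists>t\<in>{1..k}. \<forall>u\<in>{1..k}. (p u \<longleftrightarrow> t \<le> u) \<and> (q u \<longrightarrow> u = t))"
proof -
  consider (A) "\<forall>v\<in>{1..k}. \<not> q v" | (B) "\<forall>u\<in>{1..k}. \<not> p u" "\<exists>v\<in>{1..k}. q v"
    | (C) "\<exists>u\<in>{1..k}. p u" "\<exists>v\<in>{1..k}. q v" by blast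
  thus ?thesis
  proof cases
    case A
    show ?thesis
    proof (cases "\<exists>u\<in>{1..k}. p u")
      case False thus ?thesis using A by blast
    next
      case True
      define S where "S = {v\<in>{1..k}. p v}"
      have fS: "finite S" "S \<noteq> {}" using True unfolding S_def by auto
      define t where "t = Min S"
      have t: "t \<in> {1..k}" "p t" using Min_in[OF fS] unfolding t_def S_def by auto
      have tl: "t \<le> u" if "u \<in> {1..k}" "p u" for u using Min_le[OF fS(1)] that unfolding t_def S_def by auto
      have "p u \<longleftrightarrow> t \<le> u" if u: "u \<in> {1..k}" for u
      proof
        assume "p u" thus "t \<le> u" using tl u by auto
      next
        assume "t \<le> u"
        show "p u"
        proof (cases "t = u")
          case True thus ?thesis using t by auto
        next
          case False
          hence "t < u" using \<open>t \<le> u\<close> by auto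
          have "q t \<or> p u" using G1[of t t u u] t u \<open>t < u\<close> by auto
          thus ?thesis using A t by auto
        qed
      qed
      thus ?thesis using A t by blast
    qed
  next
    case B
    define S where "S = {v\<in>{1..k}. q v}"
    have fS: "finite S" "S \<noteq> {}" using B unfolding S_def by auto
    define t where "t = Max S"
    have t: "t \<in> {1..k}" "q t" using Max_in[OF fS] unfolding t_def S_def by auto
    have tg: "v \<le> t" if "v \<in> {1..k}" "q v" for v using Max_ge[OF fS(1)] that unfolding t_def S_def by auto
    have "q u \<longleftrightarrow> u \<le> t" if u: "u \<in> {1..k}" for u
    proof
      assume "q u" thus "u \<le> t" using tg u by auto
    next
      assume "u \<le> t"
      show "q u"
      proof (cases "u = t")
        case True thus ?thesis using t by auto
      next
        case False
        hence "u < t" using \<open>u \<le> t\<close> by auto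
        have "q u \<or> p t" using G1[of u u t t] t u \<open>u < t\<close> by auto
        thus ?thesis using B t by auto
      qed
    qed
    thus ?thesis using B t by blast
  next
    case C
    then obtain u0 v0 where u0: "u0 \<in> {1..k}" "p u0" and v0: "v0 \<in> {1..k}" "q v0" by auto
    have "\<exists>t\<in>{1..k}. p t \<and> q t"
    proof (cases "v0 \<le> u0")
      case True
      show ?thesis
      proof (cases "v0 = u0")
        case True thus ?thesis using u0 v0 by auto
      next
        case False
        hence "v0 < u0" using True by auto
        have "p v0 \<or> q u0" using G3[of v0 v0 u0 u0] u0 v0 \<open>v0 < u0\<close> by auto
        thus ?thesis using u0 v0 by auto
      qed
    next
      case False
      hence "u0 < v0" by auto
      have "q u0 \<and> p v0" using G2[of u0 u0 v0 v0] u0 v0 \<open>u0 < v0\<close> by auto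
      thus ?thesis using u0 by auto
    qed
    then obtain t where t: "t \<in> {1..k}" "p t" "q t" by auto
    have F: "q x \<or> p y" if "1 \<le> x" "x \<le> t" "t \<le> y" "y \<le> k" "x < y" for x y
    proof (cases "x < t")
      case True thus ?thesis using G1[of x x t y] that t by auto
    next
      case False thus ?thesis using that t by auto
    qed
    show ?thesis
    proof (cases "\<exists>y0\<in>{1..k}. t < y0 \<and> \<not> p y0")
      case True
      then obtain y0 where y0: "y0 \<in> {1..k}" "t < y0" "\<not> p y0" by auto
      have Qall: "q x" if "x \<in> {1..k}" "x \<le> t" for x using F[of x y0] that y0 by auto
      have noQ: "\<not> q v" if "v \<in> {1..k}" "t < v" for v
      proof
        assume "q v"
        show False
        proof (cases "y0 < v")
          case True
          show False using Ba[of t t y0 v] t y0 that \<open>q v\<close> True by auto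
        next
          case False
          have "q t \<and> p y0" using G2[of t t v y0] t y0 that \<open>q v\<close> False by auto
          thus False using y0 by auto
        qed
      qed
      have noPlow: "\<not> p u" if "u \<in> {1..k}" "u < t" for u
      proof
        assume "p u"
        have "q u \<and> p y0" using G2[of u u t y0] t y0 that \<open>p u\<close> by auto
        thus False using y0 by auto
      qed
      have noPhigh: "\<not> p w" if "w \<in> {1..k}" "t < w" for w
      proof
        assume "p w"
        have "w \<noteq> y0" using \<open>p w\<close> y0 by auto
        show False
        proof (cases "y0 < w")
          case True
          have "p y0 \<or> q w" using G3[of t y0 w w] t y0 that \<open>p w\<close> True by auto
          thus False using y0 noQ that by auto
        next
          case False
          hence "w < y0" using \<open>w \<noteq> y0\<close> by auto
          have "q w \<or> p y0" using G1[of w w y0 y0] y0 that \<open>p w\<close> \<open>w < y0\<close> by auto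
          thus False using y0 noQ that by auto
        qed
      qed
      have "\<forall>u\<in>{1..k}. (p u \<longrightarrow> u = t) \<and> (q u \<longleftrightarrow> u \<le> t)"
      proof
        fix u assume u: "u \<in> {1..k}"
        show "(p u \<longrightarrow> u = t) \<and> (q u \<longleftrightarrow> u \<le> t)"
          using noPlow[OF u] noPhigh[OF u] noQ[OF u] Qall[OF u] by (cases "u < t"; cases "t < u") auto
      qed
      thus ?thesis using t by blast
    next
      case noIIa: False
      show ?thesis
      proof (cases "\<exists>x0\<in>{1..k}. x0 < t \<and> \<not> q x0")
        case True
        then obtain x0 where x0: "x0 \<in> {1..k}" "x0 < t" "\<not> q x0" by auto
        have Pall: "p y" if "y \<in> {1..k}" "t \<le> y" for y using F[of x0 y] that x0 by auto
        have noPlow: "\<not> p u" if "u \<in> {1..k}" "u < t" for u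
        proof
          assume "p u"
          show False
          proof (cases "u < x0")
            case True
            show False using Bb[of u t x0 t] t x0 that \<open>p u\<close> True by auto
          next
            case False
            have "q x0 \<and> p t" using G2[of x0 u t t] t x0 that \<open>p u\<close> False by auto
            thus False using x0 by auto
          qed
        qed
        have noQhigh: "\<not> q v" if "v \<in> {1..k}" "t < v" for v
        proof
          assume "q v"
          have "q x0 \<and> p v" using G2[of x0 t v v] t x0 that \<open>q v\<close> by auto
          thus False using x0 by auto
        qed
        have noQlow: "\<not> q w" if "w \<in> {1..k}" "w < t" for w
        proof
          assume "q w"
          have "w \<noteq> x0" using \<open>q w\<close> x0 by auto
          show False
          proof (cases "x0 < w")
            case True
            have "q x0 \<or> p w" using G1[of x0 x0 w w] x0 that \<open>q w\<close> True by auto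
            thus False using x0 noPlow that by auto
          next
            case False
            hence "w < x0" using \<open>w \<noteq> x0\<close> by auto
            have "p w \<or> q x0" using G3[of w w x0 t] t x0 that \<open>q w\<close> \<open>w < x0\<close> by auto
            thus False using x0 noPlow that by auto
          qed
        qed
        have "\<forall>u\<in>{1..k}. (p u \<longleftrightarrow> t \<le> u) \<and> (q u \<longrightarrow> u = t)"
        proof
          fix u assume u: "u \<in> {1..k}"
          show "(p u \<longleftrightarrow> t \<le> u) \<and> (q u \<longrightarrow> u = t)"
            using noPlow[OF u] Pall[OF u] noQhigh[OF u] noQlow[OF u] by (cases "u < t"; cases "t < u") auto
        qed
        thus ?thesis using t by blast
      next
        case noIIb: False
        have PH: "p y" if "y \<in> {1..k}" "t \<le> y" for y
          using noIIa that t by (cases "t = y") auto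
        have QL: "q x" if "x \<in> {1..k}" "x \<le> t" for x
          using noIIb that t by (cases "t = x") auto
        have "(\<forall>x\<in>{1..k}. p x) \<or> (\<forall>y\<in>{1..k}. q y)"
        proof (rule ccontr)
          assume "\<not> ?thesis"
          then obtain x0 y1 where x0: "x0 \<in> {1..k}" "\<not> p x0" and y1: "y1 \<in> {1..k}" "\<not> q y1" by auto
          have "x0 < t" using x0 PH by (meson not_le)
          have "t < y1" using y1 QL by (meson not_le)
          have "p x0 \<or> q y1" using G3[of x0 x0 y1 y1] x0 y1 QL[of x0] PH[of y1] \<open>x0 < t\<close> \<open>t < y1\<close> by auto
          thus False using x0 y1 by auto
        qed
        thus ?thesis
        proof
          assume Pa: "\<forall>x\<in>{1..k}. p x"
          have qdown: "q x" if "x \<in> {1..k}" "v \<in> {1..k}" "x \<le> v" "q v" for x v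
          proof (cases "x = v")
            case True thus ?thesis using that by auto
          next
            case False
            thus ?thesis using G2[of x x v v] that Pa by auto
          qed
          define S where "S = {v\<in>{1..k}. q v}"
          have fS: "finite S" "S \<noteq> {}" using t unfolding S_def by auto
          define m where "m = Max S"
          have m: "m \<in> {1..k}" "q m" using Max_in[OF fS] unfolding m_def S_def by auto
          have mg: "v \<le> m" if "v \<in> {1..k}" "q v" for v using Max_ge[OF fS(1)] that unfolding m_def S_def by auto
          have qm: "q u \<longleftrightarrow> u \<le> m" if "u \<in> {1..k}" for u using qdown[of u m] mg[of u] that m by auto
          show ?thesis
          proof (cases "m = k")
            case True thus ?thesis using Pa qm by auto
          next
            case mk: False
            show ?thesis
            proof (cases "m = 1")
              case True
              have "\<forall>u\<in>{1..k}. (p u \<longleftrightarrow> 1 \<le> u) \<and> (q u \<longrightarrow> u = 1)" using Pa qm True by auto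
              thus ?thesis using m by blast
            next
              case False
              have "m + 1 \<le> k" "2 \<le> m" using m mk False by auto
              have "1 \<le> m - 1" "m - 1 < m" "m - 1 < m + 1" using \<open>2 \<le> m\<close> by auto
              have False using Bb[of "m - 1" m "m + 1" k] \<open>1 \<le> m - 1\<close> \<open>m - 1 < m\<close> \<open>m - 1 < m + 1\<close> Pa qm[of "m+1"] m \<open>m + 1 \<le> k\<close> \<open>2 \<le> m\<close> by auto
              thus ?thesis ..
            qed
          qed
        next
          assume Qa: "\<forall>y\<in>{1..k}. q y"
          have pup: "p y" if "u \<in> {1..k}" "y \<in> {1..k}" "u \<le> y" "p u" for u y
          proof (cases "u = y")
            case True thus ?thesis using that by auto
          next
            case False
            thus ?thesis using G2[of u u y y] that Qa by auto
          qed
          define S where "S = {v\<in>{1..k}. p v}"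
          have fS: "finite S" "S \<noteq> {}" using t unfolding S_def by auto
          define m where "m = Min S"
          have m: "m \<in> {1..k}" "p m" using Min_in[OF fS] unfolding m_def S_def by auto
          have ml: "m \<le> v" if "v \<in> {1..k}" "p v" for v using Min_le[OF fS(1)] that unfolding m_def S_def by auto
          have pm: "p u \<longleftrightarrow> m \<le> u" if "u \<in> {1..k}" for u using pup[of m u] ml[of u] that m by auto
          show ?thesis
          proof (cases "m = 1")
            case True thus ?thesis using Qa pm by auto
          next
            case m1: False
            show ?thesis
            proof (cases "m = k")
              case True
              have "\<forall>u\<in>{1..k}. (p u \<longrightarrow> u = k) \<and> (q u \<longleftrightarrow> u \<le> k)" using Qa pm True by auto
              thus ?thesis using m True by blast
            next
              case False
              have "m + 1 \<le> k" "2 \<le> m" using m m1 False by auto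
              have "1 \<le> m - 1" "m - 1 < m" "m - 1 < m + 1" "\<not> m \<le> m - 1" using \<open>2 \<le> m\<close> by auto
              have False using Ba[of 1 m "m - 1" "m + 1"] \<open>1 \<le> m - 1\<close> \<open>m - 1 < m\<close> \<open>m - 1 < m + 1\<close> \<open>\<not> m \<le> m - 1\<close> Qa pm[of "m - 1"] m \<open>m + 1 \<le> k\<close> \<open>2 \<le> m\<close> by auto
              thus ?thesis ..
            qed
          qed
        qed
      qed
    qed
  qed
qed


definition chain_str :: "'a set \<Rightarrow> ('a \<Rightarrow> 'a \<Rightarrow> bool) \<Rightarrow> nat \<Rightarrow> (nat \<Rightarrow> 'a) \<Rightarrow> (nat \<Rightarrow> 'a) \<Rightarrow> bool" where
  "chain_str V E k a c \<longleftrightarrow> (\<forall>u\<in>{1..k}. a u \<in> V \<and> c u \<in> V) \<and> inj_on a {1..k} \<and> inj_on c {1..k} \<and>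
     (\<forall>u\<in>{1..k}. \<forall>v\<in>{1..k}. a u \<noteq> c v \<and> \<not> E (a u) (a v) \<and> \<not> E (c u) (c v) \<and> (E (a u) (c v) \<longleftrightarrow> v \<le> u))"

locale chs = fgraph +
  fixes k :: nat and a :: "nat \<Rightarrow> 'a" and c :: "nat \<Rightarrow> 'a"
  assumes ch: "chain_str V E k a c"
begin

definition H where "H = a ` {1..k} \<union> c ` {1..k}"

lemma chD: "\<forall>u\<in>{1..k}. a u \<in> V \<and> c u \<in> V" "inj_on a {1..k}" "inj_on c {1..k}"
  "\<forall>u\<in>{1..k}. \<forall>v\<in>{1..k}. a u \<noteq> c v \<and> \<not> E (a u) (a v) \<and> \<not> E (c u) (c v) \<and> (E (a u) (c v) \<longleftrightarrow> v \<le> u)"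
  using ch unfolding chain_str_def by blast+

lemma aV: "1 \<le> u \<Longrightarrow> u \<le> k \<Longrightarrow> a u \<in> V" using chD(1) by simp
lemma cV: "1 \<le> u \<Longrightarrow> u \<le> k \<Longrightarrow> c u \<in> V" using chD(1) by simp
lemma a_inj: "1 \<le> u \<Longrightarrow> u \<le> k \<Longrightarrow> 1 \<le> u' \<Longrightarrow> u' \<le> k \<Longrightarrow> a u = a u' \<longleftrightarrow> u = u'"
  using chD(2) unfolding inj_on_def by (metis atLeastAtMost_iff)
lemma c_inj: "1 \<le> u \<Longrightarrow> u \<le> k \<Longrightarrow> 1 \<le> u' \<Longrightarrow> u' \<le> k \<Longrightarrow> c u = c u' \<longleftrightarrow> u = u'"
  using chD(3) unfolding inj_on_def by (metis atLeastAtMost_iff)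
lemma ac_neq: "1 \<le> u \<Longrightarrow> u \<le> k \<Longrightarrow> 1 \<le> v \<Longrightarrow> v \<le> k \<Longrightarrow> a u \<noteq> c v"
  using chD(4) by simp
lemma ca_neq: assumes "1 \<le> u" "u \<le> k" "1 \<le> v" "v \<le> k" shows "c v \<noteq> a u"
proof
  assume h: "c v = a u"
  have "a u \<noteq> c v" using ac_neq[OF assms] .
  thus False using h by simp
qed
lemma aa: "1 \<le> u \<Longrightarrow> u \<le> k \<Longrightarrow> 1 \<le> v \<Longrightarrow> v \<le> k \<Longrightarrow> \<not> E (a u) (a v)"
  using chD(4) by simp
lemma cc: "1 \<le> u \<Longrightarrow> u \<le> k \<Longrightarrow> 1 \<le> v \<Longrightarrow> v \<le> k \<Longrightarrow> \<not> E (c u) (c v)"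
  using chD(4) by simp
lemma ac: "1 \<le> u \<Longrightarrow> u \<le> k \<Longrightarrow> 1 \<le> v \<Longrightarrow> v \<le> k \<Longrightarrow> E (a u) (c v) \<longleftrightarrow> v \<le> u"
  using chD(4) by simp
lemma ca: "1 \<le> u \<Longrightarrow> u \<le> k \<Longrightarrow> 1 \<le> v \<Longrightarrow> v \<le> k \<Longrightarrow> E (c v) (a u) \<longleftrightarrow> v \<le> u"
  using ac[of u v] Ecomm[of "c v" "a u"] by simp

lemmas chs_simps = aV cV a_inj c_inj ac_neq ca_neq aa cc ac ca

lemma aH: "1 \<le> u \<Longrightarrow> u \<le> k \<Longrightarrow> a u \<in> H" unfolding H_def by auto
lemma cH: "1 \<le> u \<Longrightarrow> u \<le> k \<Longrightarrow> c u \<in> H" unfolding H_def by auto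
lemma H_cases: "x \<in> H \<Longrightarrow> (\<And>u. 1 \<le> u \<Longrightarrow> u \<le> k \<Longrightarrow> x = a u \<Longrightarrow> P) \<Longrightarrow> (\<And>u. 1 \<le> u \<Longrightarrow> u \<le> k \<Longrightarrow> x = c u \<Longrightarrow> P) \<Longrightarrow> P"
  unfolding H_def by auto
lemma HV: "H \<subseteq> V" unfolding H_def using aV cV by auto
lemma notH: "z \<notin> H \<Longrightarrow> 1 \<le> u \<Longrightarrow> u \<le> k \<Longrightarrow> z \<noteq> a u \<and> z \<noteq> c u \<and> a u \<noteq> z \<and> c u \<noteq> z"
  using aH cH by blast

lemma p4z:
  assumes z: "z \<in> V" "z \<notin> H" and idx: "1 \<le> x" "x \<le> u" "u < v" "v \<le> y" "y \<le> k"
  shows "((E z (a u) \<or> E z (c v)) \<longrightarrow> (E z (c x) \<or> E z (a y))) \<and>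
         ((E z (a u) \<and> E z (c v)) \<longrightarrow> (E z (c x) \<and> E z (a y))) \<and>
         ((E z (c x) \<and> E z (a y)) \<longrightarrow> (E z (a u) \<or> E z (c v)))"
proof -
  have r: "1 \<le> u" "u \<le> k" "1 \<le> v" "v \<le> k" "1 \<le> y" "x \<le> k" using idx by auto
  have V5: "z \<in> V" "a u \<in> V" "c x \<in> V" "a y \<in> V" "c v \<in> V" using z idx aV cV by auto
  have ne: "a u \<noteq> a y" "c x \<noteq> c v" "a u \<noteq> c x" "a u \<noteq> c v" "a y \<noteq> c x" "a y \<noteq> c v"
    using a_inj[of u y] c_inj[of x v] ac_neq[of u x] ac_neq[of u v] ac_neq[of y x] ac_neq[of y v] idx by auto
  have nz: "z \<noteq> a u" "z \<noteq> c x" "z \<noteq> a y" "z \<noteq> c v"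
    using notH[OF z(2), of u] notH[OF z(2), of x] notH[OF z(2), of y] notH[OF z(2), of v] idx by auto
  have d: "distinct [z, a u, c x, a y, c v]"
    using ne nz by auto
  have hf: "E (a u) (c x)" "E (a y) (c x)" "E (a y) (c v)" "\<not> E (a u) (c v)"
    "\<not> E (a u) (a y)" "\<not> E (c x) (c v)"
    using ac[of u x] ac[of y x] ac[of y v] ac[of u v] aa[of u y] cc[of x v] idx by auto
  have hs: "E (c x) (a u)" "E (c x) (a y)" "E (c v) (a y)" "\<not> E (c v) (a u)"
    "\<not> E (a y) (a u)" "\<not> E (c v) (c x)" using hf Ecomm by auto
  have zs: "E (a u) z = E z (a u)" "E (c x) z = E z (c x)" "E (a y) z = E z (a y)" "E (c v) z = E z (c v)"
    using Ecomm by auto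
  have 1: False if "E z (a u)" "\<not> E z (c x)" "\<not> E z (a y)" "\<not> E z (c v)"
    by (rule no_P5[OF V5 d(1)]) (use that hf hs zs V5 ne nz in \<open>simp_all\<close>)
  have 2: False if "\<not> E z (a u)" "\<not> E z (c x)" "\<not> E z (a y)" "E z (c v)"
    by (rule no_P5[of "a u" "c x" "a y" "c v" z]) (use that hf hs zs V5 ne nz in \<open>simp_all\<close>)
  have 3: False if "E z (a u)" "\<not> E z (c x)" "\<not> E z (a y)" "E z (c v)"
    by (rule no_C5[OF V5 d(1)]) (use that hf hs zs V5 ne nz in \<open>simp_all\<close>)
  have 4: False if "\<not> E z (a u)" "E z (c x)" "E z (a y)" "\<not> E z (c v)"
    by (rule no_bull[of "c x" "a y" z "a u" "c v"]) (use that hf hs zs V5 ne nz in \<open>simp_all\<close>)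
  have 5: False if "E z (a u)" "E z (c x)" "\<not> E z (a y)" "E z (c v)"
    by (rule no_house[of "a u" z "c x" "a y" "c v"]) (use that hf hs zs V5 ne nz in \<open>simp_all\<close>)
  have 6: False if "E z (a u)" "\<not> E z (c x)" "E z (a y)" "E z (c v)"
    by (rule no_house[of "c v" "a y" z "a u" "c x"]) (use that hf hs zs V5 ne nz in \<open>simp_all\<close>)
  show ?thesis using 1 2 3 4 5 6 by blast
qed


lemma bull_a:
  assumes z: "z \<in> V" "z \<notin> H"
    and idx: "1 \<le> U" "U \<le> P" "U \<le> P'" "P' < W" "P < W" "W \<le> k"
    and h: "E z (c U)" "E z (a P)" "\<not> E z (a P')" "E z (c W)"
  shows False
proof -
  have ne: "c U \<noteq> c W" "a P \<noteq> a P'" "a P \<noteq> c U" "a P \<noteq> c W" "a P' \<noteq> c U" "a P' \<noteq> c W"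
    using c_inj[of U W] h(2,3) ac_neq[of P U] ac_neq[of P W] ac_neq[of P' U] ac_neq[of P' W] idx by auto
  have nz: "z \<noteq> c U" "z \<noteq> a P" "z \<noteq> a P'" "z \<noteq> c W"
    using notH[OF z(2), of U] notH[OF z(2), of P] notH[OF z(2), of P'] notH[OF z(2), of W] idx by auto
  have hf: "E (c U) (a P)" "E (c U) (a P')" "\<not> E (c U) (c W)" "\<not> E (a P) (a P')" "\<not> E (a P) (c W)"
    "\<not> E (a P') (c W)"
    using ca[of P U] ca[of P' U] cc[of U W] aa[of P P'] ac[of P W] ac[of P' W] idx by auto
  have zs: "E (c U) z = E z (c U)" using Ecomm by auto
  show False
    by (rule no_bull[of "c U" z "a P" "a P'" "c W"]) (use z idx h hf zs ne nz aV cV in \<open>simp_all\<close>)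
qed

lemma bull_b:
  assumes z: "z \<in> V" "z \<notin> H"
    and idx: "1 \<le> U" "U < Q" "U < Q'" "Q \<le> Y" "Q' \<le> Y" "Y \<le> k"
    and h: "E z (a Y)" "E z (c Q)" "\<not> E z (c Q')" "E z (a U)"
  shows False
proof -
  have ne: "a Y \<noteq> a U" "c Q \<noteq> c Q'" "a Y \<noteq> c Q" "a Y \<noteq> c Q'" "a U \<noteq> c Q" "a U \<noteq> c Q'"
    using a_inj[of Y U] h(2,3) ac_neq[of Y Q] ac_neq[of Y Q'] ac_neq[of U Q] ac_neq[of U Q'] idx by auto
  have nz: "z \<noteq> a Y" "z \<noteq> c Q" "z \<noteq> c Q'" "z \<noteq> a U"
    using notH[OF z(2), of Y] notH[OF z(2), of Q] notH[OF z(2), of Q'] notH[OF z(2), of U] idx by auto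
  have hf: "E (a Y) (c Q)" "E (a Y) (c Q')" "\<not> E (a Y) (a U)" "\<not> E (c Q) (c Q')" "\<not> E (c Q) (a U)"
    "\<not> E (c Q') (a U)"
    using ac[of Y Q] ac[of Y Q'] aa[of Y U] cc[of Q Q'] ca[of U Q] ca[of U Q'] idx by auto
  have zs: "E (a Y) z = E z (a Y)" using Ecomm by auto
  show False
    by (rule no_bull[of "a Y" z "c Q" "c Q'" "a U"]) (use z idx h hf zs ne nz aV cV in \<open>simp_all\<close>)
qed

definition twin where "twin z h \<longleftrightarrow> z \<in> V - H \<and> h \<in> H \<and> (\<forall>w\<in>H - {h}. E z w \<longleftrightarrow> E h w)"

lemma S:
  assumes z: "z \<in> V" "z \<notin> H"
  shows "(\<forall>w\<in>H. E z w) \<or> (\<forall>w\<in>H. \<not> E z w) \<or> (\<exists>h. twin z h)"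
proof -
  let ?p = "\<lambda>u. E z (a u)" and ?q = "\<lambda>u. E z (c u)"
  have C: "(\<forall>u\<in>{1..k}. \<not> ?p u \<and> \<not> ?q u) \<or> (\<forall>u\<in>{1..k}. ?p u \<and> ?q u) \<or>
         (\<exists>t\<in>{1..k}. \<forall>u\<in>{1..k}. (?p u \<longrightarrow> u = t) \<and> (?q u \<longleftrightarrow> u \<le> t)) \<or>
         (\<exists>t\<in>{1..k}. \<forall>u\<in>{1..k}. (?p u \<longleftrightarrow> t \<le> u) \<and> (?q u \<longrightarrow> u = t))"
  proof (rule S_comb)
    fix x u v y assume "1 \<le> x" "x \<le> u" "u < v" "v \<le> y" "y \<le> k" "?p u \<or> ?q v"
    thus "?q x \<or> ?p y" using p4z[OF z, of x u v y] by blast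
  next
    fix x u v y assume "1 \<le> x" "x \<le> u" "u < v" "v \<le> y" "y \<le> k" "?p u" "?q v"
    thus "?q x \<and> ?p y" using p4z[OF z, of x u v y] by blast
  next
    fix x u v y assume "1 \<le> x" "x \<le> u" "u < v" "v \<le> y" "y \<le> k" "?q x" "?p y"
    thus "?p u \<or> ?q v" using p4z[OF z, of x u v y] by blast
  next
    fix U P P' W assume "1 \<le> U" "U \<le> P" "U \<le> P'" "P' < W" "P < W" "W \<le> k"
      "?q U" "?p P" "\<not> ?p P'" "?q W"
    thus False using bull_a[OF z] by blast
  next
    fix U Q Q' Y assume "1 \<le> U" "U < Q" "U < Q'" "Q \<le> Y" "Q' \<le> Y" "Y \<le> k"
      "?p Y" "?q Q" "\<not> ?q Q'" "?p U"
    thus False using bull_b[OF z] by blast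
  qed
  have zVH: "z \<in> V - H" using z by auto
  from C show ?thesis
  proof (elim disjE)
    assume h: "\<forall>u\<in>{1..k}. \<not> ?p u \<and> \<not> ?q u"
    have "\<forall>w\<in>H. \<not> E z w"
    proof
      fix w assume "w \<in> H"
      thus "\<not> E z w" by (rule H_cases) (use h in auto)
    qed
    thus ?thesis by blast
  next
    assume h: "\<forall>u\<in>{1..k}. ?p u \<and> ?q u"
    have "\<forall>w\<in>H. E z w"
    proof
      fix w assume "w \<in> H"
      thus "E z w" by (rule H_cases) (use h in auto)
    qed
    thus ?thesis by blast
  next
    assume "\<exists>t\<in>{1..k}. \<forall>u\<in>{1..k}. (?p u \<longrightarrow> u = t) \<and> (?q u \<longleftrightarrow> u \<le> t)"
    then obtain t where t: "1 \<le> t" "t \<le> k" and h: "\<forall>u\<in>{1..k}. (?p u \<longrightarrow> u = t) \<and> (?q u \<longleftrightarrow> u \<le> t)"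
      by auto
    have "twin z (a t)" unfolding twin_def
    proof (intro conjI ballI)
      show "z \<in> V - H" by (rule zVH)
      show "a t \<in> H" using aH t by auto
      fix w assume w: "w \<in> H - {a t}"
      hence "w \<in> H" by auto
      thus "E z w \<longleftrightarrow> E (a t) w"
      proof (rule H_cases)
        fix u assume u: "1 \<le> u" "u \<le> k" "w = a u"
        hence "u \<noteq> t" using w by auto
        thus ?thesis using h u aa[of t u] t by auto
      next
        fix u assume u: "1 \<le> u" "u \<le> k" "w = c u"
        thus ?thesis using h u ac[of t u] t by auto
      qed
    qed
    thus ?thesis by blast
  next
    assume "\<exists>t\<in>{1..k}. \<forall>u\<in>{1..k}. (?p u \<longleftrightarrow> t \<le> u) \<and> (?q u \<longrightarrow> u = t)"
    then obtain t where t: "1 \<le> t" "t \<le> k" and h: "\<forall>u\<in>{1..k}. (?p u \<longleftrightarrow> t \<le> u) \<and> (?q u \<longrightarrow> u = t)"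
      by auto
    have "twin z (c t)" unfolding twin_def
    proof (intro conjI ballI)
      show "z \<in> V - H" by (rule zVH)
      show "c t \<in> H" using cH t by auto
      fix w assume w: "w \<in> H - {c t}"
      hence "w \<in> H" by auto
      thus "E z w \<longleftrightarrow> E (c t) w"
      proof (rule H_cases)
        fix u assume u: "1 \<le> u" "u \<le> k" "w = a u"
        thus ?thesis using h u ca[of u t] t by auto
      next
        fix u assume u: "1 \<le> u" "u \<le> k" "w = c u"
        hence "u \<noteq> t" using w by auto
        thus ?thesis using h u cc[of t u] t by auto
      qed
    qed
    thus ?thesis by blast
  qed
qed

end


context chs begin

lemma D0b:
  assumes "1 \<le> k" "h \<in> H" shows "\<exists>w\<in>H. E h w"
  using assms(2)
proof (rule H_cases)
  fix u assume u: "1 \<le> u" "u \<le> k" "h = a u"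
  thus ?thesis using cH[of 1] ac[of u 1] assms(1) by auto
next
  fix u assume u: "1 \<le> u" "u \<le> k" "h = c u"
  thus ?thesis using aH[of k] ca[of k u] assms(1) by auto
qed

lemma D0a:
  assumes "2 \<le> k" "h \<in> H" shows "\<exists>w\<in>H - {h}. \<not> E h w"
  using assms(2)
proof (rule H_cases)
  fix u assume u: "1 \<le> u" "u \<le> k" "h = a u"
  define i where "i = (if u = 1 then 2 else (1::nat))"
  have i: "1 \<le> i" "i \<le> k" "i \<noteq> u" using u assms(1) unfolding i_def by auto
  thus ?thesis using u aH[OF i(1,2)] aa[of u i] a_inj[of u i] by auto
next
  fix u assume u: "1 \<le> u" "u \<le> k" "h = c u"
  define i where "i = (if u = 1 then 2 else (1::nat))"
  have i: "1 \<le> i" "i \<le> k" "i \<noteq> u" using u assms(1) unfolding i_def by auto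
  thus ?thesis using u cH[OF i(1,2)] cc[of u i] c_inj[of u i] by auto
qed

lemma D1:
  assumes "3 \<le> k" "g \<in> H" "h \<in> H" "\<forall>w\<in>H - {g, h}. E g w"
  shows False
proof -
  have two: "\<exists>i1 i2. 1 \<le> i1 \<and> i1 \<le> k \<and> 1 \<le> i2 \<and> i2 \<le> k \<and> i1 \<noteq> i2 \<and> i1 \<noteq> u \<and> i2 \<noteq> u" for u :: nat
  proof (cases "u = 1")
    case True thus ?thesis using assms(1) by (intro exI[of _ 2] exI[of _ 3]) auto
  next
    case False
    show ?thesis
    proof (cases "u = 2")
      case True thus ?thesis using assms(1) by (intro exI[of _ 1] exI[of _ 3]) auto
    next
      case False
      thus ?thesis using assms(1) \<open>u \<noteq> 1\<close> by (intro exI[of _ 1] exI[of _ 2]) auto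
    qed
  qed
  show False using assms(2)
  proof (rule H_cases)
    fix u assume u: "1 \<le> u" "u \<le> k" "g = a u"
    obtain i1 i2 where i: "1 \<le> i1" "i1 \<le> k" "1 \<le> i2" "i2 \<le> k" "i1 \<noteq> i2" "i1 \<noteq> u" "i2 \<noteq> u"
      using two[of u] by blast
    have "a i1 \<noteq> a i2" "a i1 \<noteq> a u" "a i2 \<noteq> a u" using a_inj i u by auto
    hence "a i1 \<in> H - {g, h} \<or> a i2 \<in> H - {g, h}" using aH i u by auto
    thus False using assms(4) aa[of u i1] aa[of u i2] u i by auto
  next
    fix u assume u: "1 \<le> u" "u \<le> k" "g = c u"
    obtain i1 i2 where i: "1 \<le> i1" "i1 \<le> k" "1 \<le> i2" "i2 \<le> k" "i1 \<noteq> i2" "i1 \<noteq> u" "i2 \<noteq> u"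
      using two[of u] by blast
    have "c i1 \<noteq> c i2" "c i1 \<noteq> c u" "c i2 \<noteq> c u" using c_inj i u by auto
    hence "c i1 \<in> H - {g, h} \<or> c i2 \<in> H - {g, h}" using cH i u by auto
    thus False using assms(4) cc[of u i1] cc[of u i2] u i by auto
  qed
qed

lemma D2:
  assumes "g \<in> H" "h \<in> H" "E g h" "\<forall>w\<in>H - {g, h}. \<not> E g w"
  shows "(g = a 1 \<and> h = c 1) \<or> (g = c k \<and> h = a k)"
  using assms(1)
proof (rule H_cases)
  fix u assume u: "1 \<le> u" "u \<le> k" "g = a u"
  have "u = 1"
  proof (rule ccontr)
    assume "u \<noteq> 1"
    hence "c 1 \<noteq> c 2" "c 1 \<noteq> g" "c 2 \<noteq> g" using c_inj[of 1 2] ca_neq u by auto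
    hence "c 1 \<in> H - {g, h} \<or> c 2 \<in> H - {g, h}" using cH u \<open>u \<noteq> 1\<close> by auto
    thus False using assms(4) ac[of u 1] ac[of u 2] u \<open>u \<noteq> 1\<close> by auto
  qed
  have "h = c 1" using assms(2)
  proof (rule H_cases)
    fix v assume "1 \<le> v" "v \<le> k" "h = a v"
    thus ?thesis using assms(3) aa[of u v] u by auto
  next
    fix v assume "1 \<le> v" "v \<le> k" "h = c v"
    thus ?thesis using assms(3) ac[of u v] u \<open>u = 1\<close> by auto
  qed
  thus ?thesis using u \<open>u = 1\<close> by auto
next
  fix u assume u: "1 \<le> u" "u \<le> k" "g = c u"
  have "u = k"
  proof (rule ccontr)
    assume "u \<noteq> k"
    hence "a k \<noteq> a (k - 1)" "a k \<noteq> g" "a (k - 1) \<noteq> g" using a_inj[of k "k - 1"] ac_neq u by auto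
    have km: "1 \<le> k - 1" "u \<le> k - 1" "k - 1 \<le> k" using u \<open>u \<noteq> k\<close> by auto
    have "a k \<in> H - {g, h} \<or> a (k - 1) \<in> H - {g, h}" using aH[of k] aH[OF km(1,3)] u \<open>a k \<noteq> a (k - 1)\<close> \<open>a k \<noteq> g\<close> \<open>a (k - 1) \<noteq> g\<close> by auto
    moreover have "E g (a k)" "E g (a (k - 1))" using ca[of k u] ca[OF km(1,3), of u] u km by auto
    ultimately show False using assms(4) by auto
  qed
  have "h = a k" using assms(2)
  proof (rule H_cases)
    fix v assume "1 \<le> v" "v \<le> k" "h = a v"
    thus ?thesis using assms(3) ca[of v u] u \<open>u = k\<close> by auto
  next
    fix v assume "1 \<le> v" "v \<le> k" "h = c v"
    thus ?thesis using assms(3) cc[of u v] u by auto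
  qed
  thus ?thesis using u \<open>u = k\<close> by auto
qed

lemma D3_ac:
  assumes "2 \<le> k" "1 \<le> u" "u \<le> k" "1 \<le> v" "v \<le> k"
  shows "\<exists>w\<in>H - {a u, c v}. E (a u) w \<noteq> E (c v) w"
proof (cases "v \<le> u")
  case True
  show ?thesis
  proof (cases "2 \<le> u")
    case True
    define j where "j = (if v = 1 then 2 else (1::nat))"
    have j: "1 \<le> j" "j \<le> u" "j \<noteq> v" using True \<open>v \<le> u\<close> assms unfolding j_def by auto
    have "c j \<in> H - {a u, c v}" using cH[of j] c_inj[of j v] ca_neq[of u j] j assms by auto
    moreover have "E (a u) (c j) \<noteq> E (c v) (c j)" using ac[of u j] cc[of v j] j assms by auto
    ultimately show ?thesis by blast
  next
    case False
    hence "u = 1" "v = 1" using assms \<open>v \<le> u\<close> by auto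
    have "a 2 \<in> H - {a u, c v}" using aH[of 2] a_inj[of 2 u] ac_neq[of 2 v] assms \<open>u = 1\<close> by auto
    moreover have "E (a u) (a 2) \<noteq> E (c v) (a 2)" using aa[of u 2] ca[of 2 v] assms \<open>u = 1\<close> \<open>v = 1\<close> by auto
    ultimately show ?thesis by blast
  qed
next
  case False
  have "c 1 \<in> H - {a u, c v}" using cH[of 1] c_inj[of 1 v] ca_neq[of u 1] assms False by auto
  moreover have "E (a u) (c 1) \<noteq> E (c v) (c 1)" using ac[of u 1] cc[of v 1] assms False by auto
  ultimately show ?thesis by blast
qed

lemma D3:
  assumes "2 \<le> k" "h \<in> H" "h' \<in> H" "h \<noteq> h'"
  shows "\<exists>w\<in>H - {h, h'}. E h w \<noteq> E h' w"
  using assms(2)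
proof (rule H_cases)
  fix u assume u: "1 \<le> u" "u \<le> k" "h = a u"
  show ?thesis using assms(3)
  proof (rule H_cases)
    fix u' assume u': "1 \<le> u'" "u' \<le> k" "h' = a u'"
    hence "u \<noteq> u'" using u assms(4) by auto
    define m where "m = max u u'"
    have m: "1 \<le> m" "m \<le> k" using u u' unfolding m_def by auto
    have "c m \<in> H - {h, h'}" using cH[OF m] ca_neq u u' m by auto
    moreover have "E h (c m) \<noteq> E h' (c m)" using ac[of u m] ac[of u' m] u u' m \<open>u \<noteq> u'\<close>
      unfolding m_def by auto
    ultimately show ?thesis by blast
  next
    fix v assume v: "1 \<le> v" "v \<le> k" "h' = c v"
    thus ?thesis using D3_ac[OF assms(1) u(1,2) v(1,2)] u by auto
  qed
next
  fix v assume v: "1 \<le> v" "v \<le> k" "h = c v"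
  show ?thesis using assms(3)
  proof (rule H_cases)
    fix u assume u: "1 \<le> u" "u \<le> k" "h' = a u"
    obtain w where "w \<in> H - {a u, c v}" "E (a u) w \<noteq> E (c v) w" using D3_ac[OF assms(1) u(1,2) v(1,2)] by blast
    thus ?thesis using u v by auto
  next
    fix v' assume v': "1 \<le> v'" "v' \<le> k" "h' = c v'"
    hence "v \<noteq> v'" using v assms(4) by auto
    define m where "m = min v v'"
    have m: "1 \<le> m" "m \<le> k" using v v' unfolding m_def by auto
    have "a m \<in> H - {h, h'}" using aH[OF m] ac_neq v v' m by auto
    moreover have "E h (a m) \<noteq> E h' (a m)" using ca[of m v] ca[of m v'] v v' m \<open>v \<noteq> v'\<close>
      unfolding m_def by auto
    ultimately show ?thesis by blast
  qed
qed

lemma two_dist: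
  assumes "w1 \<in> H" "w2 \<in> H" "w1 \<noteq> w2" "w1 \<noteq> h'" "w1 \<noteq> g" "w2 \<noteq> h'" "w2 \<noteq> g"
    "E h' w1 \<noteq> E g w1" "E h' w2 \<noteq> E g w2" "\<forall>w\<in>H - {h, h', g}. E h' w \<longleftrightarrow> E g w"
  shows False
  using assms by blast

lemma D4_aa:
  assumes u: "1 \<le> u" "u < u'" "u' \<le> k" and h: "h \<in> H" "h \<noteq> a u" "h \<noteq> a u'"
    and ag: "\<forall>w\<in>H - {h, a u, a u'}. E (a u) w \<longleftrightarrow> E (a u') w"
  shows "u' = u + 1 \<and> h = c (u + 1)"
proof -
  have r: "1 \<le> u + 1" "u + 1 \<le> k" using u by auto
  have d1: "E (a u) (c (u+1)) \<noteq> E (a u') (c (u+1))" using ac[of u "u+1"] ac[of u' "u+1"] u by auto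
  have "c (u+1) \<in> H" "c (u+1) \<noteq> a u" "c (u+1) \<noteq> a u'" using cH[OF r] ca_neq u r by auto
  hence hc: "h = c (u+1)" using ag d1 by blast
  have "u' = u + 1"
  proof (rule ccontr)
    assume "u' \<noteq> u + 1"
    hence r2: "1 \<le> u + 2" "u + 2 \<le> u'" using u by auto
    have d2: "E (a u) (c (u+2)) \<noteq> E (a u') (c (u+2))" using ac[of u "u+2"] ac[of u' "u+2"] u r2 by auto
    have "c (u+2) \<in> H" "c (u+2) \<noteq> a u" "c (u+2) \<noteq> a u'" "c (u+2) \<noteq> h"
      using cH[of "u+2"] ca_neq[of u "u+2"] ca_neq[of u' "u+2"] c_inj[of "u+2" "u+1"] u r2 hc by auto
    thus False using ag d2 by blast
  qed
  thus ?thesis using hc by auto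
qed

lemma D4_cc:
  assumes v: "1 \<le> v" "v < v'" "v' \<le> k" and h: "h \<in> H" "h \<noteq> c v" "h \<noteq> c v'"
    and ag: "\<forall>w\<in>H - {h, c v, c v'}. E (c v) w \<longleftrightarrow> E (c v') w"
  shows "v' = v + 1 \<and> h = a v"
proof -
  have d1: "E (c v) (a v) \<noteq> E (c v') (a v)" using ca[of v v] ca[of v v'] v by auto
  have "a v \<in> H" "a v \<noteq> c v" "a v \<noteq> c v'" using aH[of v] ac_neq v by auto
  hence hc: "h = a v" using ag d1 by blast
  have "v' = v + 1"
  proof (rule ccontr)
    assume "v' \<noteq> v + 1"
    hence r2: "1 \<le> v + 1" "v + 2 \<le> v'" using v by auto
    have d2: "E (c v) (a (v+1)) \<noteq> E (c v') (a (v+1))" using ca[of "v+1" v] ca[of "v+1" v'] v r2 by auto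
    have "a (v+1) \<in> H" "a (v+1) \<noteq> c v" "a (v+1) \<noteq> c v'" "a (v+1) \<noteq> h"
      using aH[of "v+1"] ac_neq[of "v+1" v] ac_neq[of "v+1" v'] a_inj[of "v+1" v] v r2 hc by auto
    thus False using ag d2 by blast
  qed
  thus ?thesis using hc by auto
qed

lemma D4_ac:
  assumes u: "1 \<le> u" "u \<le> k" and v: "1 \<le> v" "v \<le> k" and h: "h \<in> H"
    and ag: "\<forall>w\<in>H - {h, a u, c v}. E (a u) w \<longleftrightarrow> E (c v) w"
  shows "k \<le> 2 \<and> u = v"
proof -
  have gen: False if "1 \<le> j" "j \<le> k" "1 \<le> i" "i \<le> k" "j \<noteq> v" "i \<noteq> u" "j \<le> u" "v \<le> i" for i j
  proof -
    show False
    proof (rule two_dist[of "c j" "a i" "a u" "c v" h])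
      show "c j \<in> H" "a i \<in> H" using cH aH that by auto
      show "c j \<noteq> a i" "c j \<noteq> a u" "a i \<noteq> c v" using ca_neq ac_neq that u v by auto
      show "c j \<noteq> c v" using c_inj that v by auto
      show "a i \<noteq> a u" using a_inj that u by auto
      show "E (a u) (c j) \<noteq> E (c v) (c j)" using ac[of u j] cc[of v j] that u v by auto
      show "E (a u) (a i) \<noteq> E (c v) (a i)" using aa[of u i] ca[of i v] that u v by auto
      show "\<forall>w\<in>H - {h, a u, c v}. E (a u) w \<longleftrightarrow> E (c v) w" by (rule ag)
    qed
  qed
  have genc: False if "1 \<le> j" "j < j'" "j' \<le> u" "j \<noteq> v" "j' \<noteq> v" for j j'
  proof (rule two_dist[of "c j" "c j'" "a u" "c v" h])
    show "c j \<in> H" "c j' \<in> H" using cH that u by auto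
    show "c j \<noteq> c j'" "c j \<noteq> c v" "c j' \<noteq> c v" using c_inj that u v by auto
    show "c j \<noteq> a u" "c j' \<noteq> a u" using ca_neq that u by auto
    show "E (a u) (c j) \<noteq> E (c v) (c j)" "E (a u) (c j') \<noteq> E (c v) (c j')"
      using ac[of u j] cc[of v j] ac[of u j'] cc[of v j'] that u v by auto
    show "\<forall>w\<in>H - {h, a u, c v}. E (a u) w \<longleftrightarrow> E (c v) w" by (rule ag)
  qed
  have gena: False if "v \<le> i" "i < i'" "i' \<le> k" "i \<noteq> u" "i' \<noteq> u" for i i'
  proof (rule two_dist[of "a i" "a i'" "a u" "c v" h])
    show "a i \<in> H" "a i' \<in> H" using aH that v by auto
    show "a i \<noteq> a i'" "a i \<noteq> a u" "a i' \<noteq> a u" using a_inj that u v by auto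
    show "a i \<noteq> c v" "a i' \<noteq> c v" using ac_neq that v by auto
    show "E (a u) (a i) \<noteq> E (c v) (a i)" "E (a u) (a i') \<noteq> E (c v) (a i')"
      using aa[of u i] ca[of i v] aa[of u i'] ca[of i' v] that u v by auto
    show "\<forall>w\<in>H - {h, a u, c v}. E (a u) w \<longleftrightarrow> E (c v) w" by (rule ag)
  qed
  have "u = v"
  proof (rule ccontr)
    assume "u \<noteq> v"
    show False
    proof (cases "u < v")
      case True
      show False using gen[of 1 k] True u v by auto
    next
      case False
      show False using gen[of u v] False \<open>u \<noteq> v\<close> u v by auto
    qed
  qed
  have "k \<le> 2"
  proof (rule ccontr)
    assume "\<not> k \<le> 2"
    show False
    proof (cases "3 \<le> u")
      case True thus False using genc[of 1 2] \<open>u = v\<close> by auto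
    next
      case False
      show False
      proof (cases "u = 2")
        case True thus False using gen[of 1 3] \<open>u = v\<close> \<open>\<not> k \<le> 2\<close> by auto
      next
        case False
        hence "u = 1" using \<open>\<not> 3 \<le> u\<close> u by auto
        thus False using gena[of 2 3] \<open>u = v\<close> \<open>\<not> k \<le> 2\<close> by auto
      qed
    qed
  qed
  thus ?thesis using \<open>u = v\<close> by auto
qed

definition "crel h' g h \<longleftrightarrow>
  (\<exists>u. 1 \<le> u \<and> u < k \<and> ((h' = a u \<and> g = a (u+1)) \<or> (h' = a (u+1) \<and> g = a u)) \<and> h = c (u+1)) \<or>
  (\<exists>v. 1 \<le> v \<and> v < k \<and> ((h' = c v \<and> g = c (v+1)) \<or> (h' = c (v+1) \<and> g = c v)) \<and> h = a v) \<or>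
  (k = 2 \<and> E h' g)"

lemma D4:
  assumes k: "2 \<le> k" and H: "h' \<in> H" "g \<in> H" "h \<in> H" and ne: "h' \<noteq> g" "h \<noteq> h'" "h \<noteq> g"
    and ag: "\<forall>w\<in>H - {h, h', g}. E h' w \<longleftrightarrow> E g w"
  shows "crel h' g h"
  using H(1)
proof (rule H_cases)
  fix u assume u: "1 \<le> u" "u \<le> k" "h' = a u"
  show ?thesis using H(2)
  proof (rule H_cases)
    fix u' assume u': "1 \<le> u'" "u' \<le> k" "g = a u'"
    hence "u \<noteq> u'" using u ne by auto
    show ?thesis
    proof (cases "u < u'")
      case True
      have "u' = u + 1 \<and> h = c (u + 1)" using D4_aa[of u u' h] True u u' ne ag H by auto
      thus ?thesis unfolding crel_def using u u' by auto
    next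
      case False
      hence "u' < u" using \<open>u \<noteq> u'\<close> by auto
      have ag': "\<forall>w\<in>H - {h, a u', a u}. E (a u') w \<longleftrightarrow> E (a u) w" using ag u u' by auto
      have "u = u' + 1 \<and> h = c (u' + 1)" using D4_aa[of u' u h] \<open>u' < u\<close> u u' ne ag' H by auto
      thus ?thesis unfolding crel_def using u u' by auto
    qed
  next
    fix v assume v: "1 \<le> v" "v \<le> k" "g = c v"
    have "k \<le> 2 \<and> u = v" using D4_ac[of u v h] u v H ag by auto
    thus ?thesis unfolding crel_def using u v k ac[of u v] by auto
  qed
next
  fix v assume v: "1 \<le> v" "v \<le> k" "h' = c v"
  show ?thesis using H(2)
  proof (rule H_cases)
    fix u assume u: "1 \<le> u" "u \<le> k" "g = a u"
    have ag': "\<forall>w\<in>H - {h, a u, c v}. E (a u) w \<longleftrightarrow> E (c v) w" using ag u v by auto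
    have "k \<le> 2 \<and> u = v" using D4_ac[of u v h] u v H ag' by auto
    thus ?thesis unfolding crel_def using u v k ca[of u v] by auto
  next
    fix v' assume v': "1 \<le> v'" "v' \<le> k" "g = c v'"
    hence "v \<noteq> v'" using v ne by auto
    show ?thesis
    proof (cases "v < v'")
      case True
      have "v' = v + 1 \<and> h = a v" using D4_cc[of v v' h] True v v' ne ag H by auto
      thus ?thesis unfolding crel_def using v v' by auto
    next
      case False
      hence "v' < v" using \<open>v \<noteq> v'\<close> by auto
      have ag': "\<forall>w\<in>H - {h, c v', c v}. E (c v') w \<longleftrightarrow> E (c v) w" using ag v v' by auto
      have "v = v' + 1 \<and> h = a v'" using D4_cc[of v' v h] \<open>v' < v\<close> v v' ne ag' H by auto
      thus ?thesis unfolding crel_def using v v' by auto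
    qed
  qed
qed

end


definition ins :: "(nat \<Rightarrow> 'a) \<Rightarrow> nat \<Rightarrow> 'a \<Rightarrow> nat \<Rightarrow> 'a" where
  "ins f p x i = (if i < p then f i else if i = p then x else f (i - 1))"

context chs begin

lemma twinD: "twin y h \<Longrightarrow> y \<in> V" "twin y h \<Longrightarrow> y \<notin> H" "twin y h \<Longrightarrow> h \<in> H"
  "twin y h \<Longrightarrow> w \<in> H \<Longrightarrow> w \<noteq> h \<Longrightarrow> E y w \<longleftrightarrow> E h w"
  unfolding twin_def by auto

lemma repl_a:
  assumes tw: "twin y (a t)" and t: "1 \<le> t" "t \<le> k"
  shows "chain_str V E k (a(t := y)) c"
proof -
  have yV: "y \<in> V" and yH: "y \<notin> H" using twinD tw by auto
  have ya: "\<not> E y (a v)" if "1 \<le> v" "v \<le> k" "v \<noteq> t" for v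
    using twinD(4)[OF tw aH[OF that(1,2)]] a_inj[of v t] aa[of t v] that t by auto
  have yc: "E y (c v) \<longleftrightarrow> v \<le> t" if "1 \<le> v" "v \<le> k" for v
    using twinD(4)[OF tw cH[OF that]] ca_neq[of t v] ac[of t v] that t by auto
  have yne: "y \<noteq> a v" "y \<noteq> c v" if "1 \<le> v" "v \<le> k" for v using notH[OF yH that] by auto
  show ?thesis unfolding chain_str_def
  proof (intro conjI)
    show "\<forall>u\<in>{1..k}. (a(t := y)) u \<in> V \<and> c u \<in> V" using yV aV cV by auto
  next
    show "inj_on (a(t := y)) {1..k}"
      by (rule inj_on_fun_updI[OF chD(2)]) (use yH in \<open>auto simp: H_def\<close>)
  next
    show "inj_on c {1..k}" using chD(3) .
  next
    show "\<forall>u\<in>{1..k}. \<forall>v\<in>{1..k}. (a(t := y)) u \<noteq> c v \<and> \<not> E ((a(t := y)) u) ((a(t := y)) v) \<and>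
       \<not> E (c u) (c v) \<and> (E ((a(t := y)) u) (c v) \<longleftrightarrow> v \<le> u)"
    proof (intro ballI conjI)
      fix u v assume u: "u \<in> {1..k}" and v: "v \<in> {1..k}"
      show "(a(t := y)) u \<noteq> c v" using yne ac_neq u v by auto
      show "\<not> E ((a(t := y)) u) ((a(t := y)) v)"
        using ya aa u v Ecomm[of "a u" y] by auto
      show "\<not> E (c u) (c v)" using cc u v by auto
      show "E ((a(t := y)) u) (c v) \<longleftrightarrow> v \<le> u" using yc ac u v by auto
    qed
  qed
qed

lemma repl_c:
  assumes tw: "twin y (c t)" and t: "1 \<le> t" "t \<le> k"
  shows "chain_str V E k a (c(t := y))"
proof -
  have yV: "y \<in> V" and yH: "y \<notin> H" using twinD tw by auto
  have yc: "\<not> E y (c v)" if "1 \<le> v" "v \<le> k" "v \<noteq> t" for v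
    using twinD(4)[OF tw cH[OF that(1,2)]] c_inj[of v t] cc[of t v] that t by auto
  have ya: "E y (a v) \<longleftrightarrow> t \<le> v" if "1 \<le> v" "v \<le> k" for v
    using twinD(4)[OF tw aH[OF that]] ac_neq[of v t] ca[of v t] that t by auto
  have yne: "y \<noteq> a v" "y \<noteq> c v" if "1 \<le> v" "v \<le> k" for v using notH[OF yH that] by auto
  show ?thesis unfolding chain_str_def
  proof (intro conjI)
    show "\<forall>u\<in>{1..k}. a u \<in> V \<and> (c(t := y)) u \<in> V" using yV aV cV by auto
  next
    show "inj_on a {1..k}" using chD(2) .
  next
    show "inj_on (c(t := y)) {1..k}"
      by (rule inj_on_fun_updI[OF chD(3)]) (use yH in \<open>auto simp: H_def\<close>)
  next
    show "\<forall>u\<in>{1..k}. \<forall>v\<in>{1..k}. a u \<noteq> (c(t := y)) v \<and> \<not> E (a u) (a v) \<and>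
       \<not> E ((c(t := y)) u) ((c(t := y)) v) \<and> (E (a u) ((c(t := y)) v) \<longleftrightarrow> v \<le> u)"
    proof (intro ballI conjI)
      fix u v assume u: "u \<in> {1..k}" and v: "v \<in> {1..k}"
      show "a u \<noteq> (c(t := y)) v" using yne ac_neq u v by auto
      show "\<not> E (a u) (a v)" using aa u v by auto
      show "\<not> E ((c(t := y)) u) ((c(t := y)) v)"
        using yc cc u v Ecomm[of "c u" y] by auto
      show "E (a u) ((c(t := y)) v) \<longleftrightarrow> v \<le> u" using ya ac u v Ecomm[of "a u" y] by auto
    qed
  qed
qed

lemma chs_repl_a: "twin y (a t) \<Longrightarrow> 1 \<le> t \<Longrightarrow> t \<le> k \<Longrightarrow> chs V E k (a(t := y)) c"
  unfolding chs_def chs_axioms_def using fgraph_axioms repl_a by blast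

lemma chs_repl_c: "twin y (c t) \<Longrightarrow> 1 \<le> t \<Longrightarrow> t \<le> k \<Longrightarrow> chs V E k a (c(t := y))"
  unfolding chs_def chs_axioms_def using fgraph_axioms repl_c by blast

lemma replS:
  assumes tw: "twin y h" and z: "z \<in> V" "z \<notin> H" "z \<noteq> y"
  shows "(\<forall>w\<in>insert y (H - {h}). E z w) \<or> (\<forall>w\<in>insert y (H - {h}). \<not> E z w) \<or>
         (\<exists>g\<in>insert y (H - {h}). \<forall>w\<in>insert y (H - {h}) - {g}. E z w \<longleftrightarrow> E g w)"
proof -
  have hH: "h \<in> H" and yH: "y \<notin> H" using twinD tw by auto
  show ?thesis using hH
  proof (rule H_cases)
    fix t assume t: "1 \<le> t" "t \<le> k" "h = a t"
    interpret I: chs V E k "a(t := y)" c using chs_repl_a tw t by blast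
    have IH: "I.H = insert y (H - {h})"
    proof
      show "I.H \<subseteq> insert y (H - {h})"
      proof
        fix x assume "x \<in> I.H"
        thus "x \<in> insert y (H - {h})"
          unfolding I.H_def H_def using t a_inj[of _ t] ca_neq[of t] by (auto split: if_splits)
      qed
    next
      show "insert y (H - {h}) \<subseteq> I.H"
      proof
        fix x assume x: "x \<in> insert y (H - {h})"
        show "x \<in> I.H"
        proof (cases "x = y")
          case True thus ?thesis unfolding I.H_def using t by (auto intro!: image_eqI[of _ _ t])
        next
          case False
          hence "x \<in> H" "x \<noteq> a t" using x t by auto
          thus ?thesis
          proof (elim H_cases)
            fix u assume u: "1 \<le> u" "u \<le> k" "x = a u"
            hence "u \<noteq> t" using \<open>x \<noteq> a t\<close> by auto
            thus ?thesis unfolding I.H_def using u by (auto intro!: image_eqI[of _ _ u])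
          next
            fix u assume u: "1 \<le> u" "u \<le> k" "x = c u"
            thus ?thesis unfolding I.H_def by auto
          qed
        qed
      qed
    qed
    have "z \<notin> I.H" using IH z by auto
    from I.S[OF z(1) this] show ?thesis unfolding I.twin_def IH by auto
  next
    fix t assume t: "1 \<le> t" "t \<le> k" "h = c t"
    interpret I: chs V E k a "c(t := y)" using chs_repl_c tw t by blast
    have IH: "I.H = insert y (H - {h})"
    proof
      show "I.H \<subseteq> insert y (H - {h})"
      proof
        fix x assume "x \<in> I.H"
        thus "x \<in> insert y (H - {h})"
          unfolding I.H_def H_def using t c_inj[of _ t] ac_neq[of _ t] by (auto split: if_splits)
      qed
    next
      show "insert y (H - {h}) \<subseteq> I.H"
      proof
        fix x assume x: "x \<in> insert y (H - {h})"
        show "x \<in> I.H"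
        proof (cases "x = y")
          case True thus ?thesis unfolding I.H_def using t by (auto intro!: image_eqI[of _ _ t])
        next
          case False
          hence "x \<in> H" "x \<noteq> c t" using x t by auto
          thus ?thesis
          proof (elim H_cases)
            fix u assume u: "1 \<le> u" "u \<le> k" "x = a u"
            thus ?thesis unfolding I.H_def by auto
          next
            fix u assume u: "1 \<le> u" "u \<le> k" "x = c u"
            hence "u \<noteq> t" using \<open>x \<noteq> c t\<close> by auto
            thus ?thesis unfolding I.H_def using u by (auto intro!: image_eqI[of _ _ u])
          qed
        qed
      qed
    qed
    have "z \<notin> I.H" using IH z by auto
    from I.S[OF z(1) this] show ?thesis unfolding I.twin_def IH by auto
  qed
qed

lemma ins_rep:
  assumes "1 \<le> u" "u \<le> k + 1" "u \<noteq> p" "p \<le> k + 1" "1 \<le> p"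
  shows "\<exists>i. 1 \<le> i \<and> i \<le> k \<and> ins f p x u = f i \<and> u = (if i < p then i else i + 1)"
proof (cases "u < p")
  case True thus ?thesis using assms unfolding ins_def by (intro exI[of _ u]) auto
next
  case False thus ?thesis using assms unfolding ins_def by (intro exI[of _ "u - 1"]) auto
qed

lemma insert_chain:
  assumes p: "1 \<le> p" "p \<le> k + 1" and q: "p \<le> q" "q \<le> p + 1" "q \<le> k + 1"
    and x: "x \<in> V" "x \<notin> H" and w: "w \<in> V" "w \<notin> H" "x \<noteq> w"
    and xa: "\<And>i. 1 \<le> i \<Longrightarrow> i \<le> k \<Longrightarrow> \<not> E x (a i)"
    and wc: "\<And>j. 1 \<le> j \<Longrightarrow> j \<le> k \<Longrightarrow> \<not> E w (c j)"
    and xw: "E x w \<longleftrightarrow> q \<le> p"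
    and xc: "\<And>j. 1 \<le> j \<Longrightarrow> j \<le> k \<Longrightarrow> E x (c j) \<longleftrightarrow> (if j < q then j else j + 1) \<le> p"
    and aw: "\<And>i. 1 \<le> i \<Longrightarrow> i \<le> k \<Longrightarrow> E (a i) w \<longleftrightarrow> q \<le> (if i < p then i else i + 1)"
  shows "chain_str V E (k+1) (ins a p x) (ins c q w)"
proof -
  let ?A = "ins a p x" and ?C = "ins c q w"
  have Ap: "?A p = x" and Cq: "?C q = w" unfolding ins_def by auto
  have Ar: "\<exists>i. 1 \<le> i \<and> i \<le> k \<and> ?A u = a i \<and> u = (if i < p then i else i + 1)"
    if "1 \<le> u" "u \<le> k + 1" "u \<noteq> p" for u by (rule ins_rep[OF that p(2) p(1)])
  have Cr: "\<exists>j. 1 \<le> j \<and> j \<le> k \<and> ?C v = c j \<and> v = (if j < q then j else j + 1)"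
    if "1 \<le> v" "v \<le> k + 1" "v \<noteq> q" for v by (rule ins_rep[OF that q(3)]) (use p q in auto)
  have xne: "x \<noteq> a i" "x \<noteq> c i" "w \<noteq> a i" "w \<noteq> c i" if "1 \<le> i" "i \<le> k" for i
    using notH[OF x(2) that] notH[OF w(2) that] by auto
  have AV: "?A u \<in> V" if "1 \<le> u" "u \<le> k + 1" for u
    using Ar[OF that] x Ap aV by (cases "u = p") auto
  have CV: "?C u \<in> V" if "1 \<le> u" "u \<le> k + 1" for u
    using Cr[OF that] w Cq cV by (cases "u = q") auto
  show ?thesis unfolding chain_str_def
  proof (intro conjI)
    show "\<forall>u\<in>{1..k + 1}. ?A u \<in> V \<and> ?C u \<in> V" using AV CV by auto
  next
    show "inj_on ?A {1..k + 1}"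
    proof (rule inj_onI)
      fix u u' assume u: "u \<in> {1..k+1}" and u': "u' \<in> {1..k+1}" and eq: "?A u = ?A u'"
      show "u = u'"
      proof (cases "u = p"; cases "u' = p")
        assume "u = p" "u' = p" thus ?thesis by auto
      next
        assume "u = p" "u' \<noteq> p"
        then obtain i where "1 \<le> i" "i \<le> k" "?A u' = a i" using Ar u' by auto
        thus ?thesis using eq Ap \<open>u = p\<close> xne by auto
      next
        assume "u \<noteq> p" "u' = p"
        then obtain i where "1 \<le> i" "i \<le> k" "?A u = a i" using Ar u by auto
        thus ?thesis using eq Ap \<open>u' = p\<close> xne by auto
      next
        assume "u \<noteq> p" "u' \<noteq> p"
        then obtain i i' where i: "1 \<le> i" "i \<le> k" "?A u = a i" "u = (if i < p then i else i + 1)"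
          and i': "1 \<le> i'" "i' \<le> k" "?A u' = a i'" "u' = (if i' < p then i' else i' + 1)"
          using Ar u u' by (metis atLeastAtMost_iff)
        hence "i = i'" using eq a_inj by auto
        thus ?thesis using i i' by auto
      qed
    qed
  next
    show "inj_on ?C {1..k + 1}"
    proof (rule inj_onI)
      fix u u' assume u: "u \<in> {1..k+1}" and u': "u' \<in> {1..k+1}" and eq: "?C u = ?C u'"
      show "u = u'"
      proof (cases "u = q"; cases "u' = q")
        assume "u = q" "u' = q" thus ?thesis by auto
      next
        assume "u = q" "u' \<noteq> q"
        then obtain i where "1 \<le> i" "i \<le> k" "?C u' = c i" using Cr u' by auto
        thus ?thesis using eq Cq \<open>u = q\<close> xne by auto
      next
        assume "u \<noteq> q" "u' = q"
        then obtain i where "1 \<le> i" "i \<le> k" "?C u = c i" using Cr u by auto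
        thus ?thesis using eq Cq \<open>u' = q\<close> xne by auto
      next
        assume "u \<noteq> q" "u' \<noteq> q"
        then obtain i i' where i: "1 \<le> i" "i \<le> k" "?C u = c i" "u = (if i < q then i else i + 1)"
          and i': "1 \<le> i'" "i' \<le> k" "?C u' = c i'" "u' = (if i' < q then i' else i' + 1)"
          using Cr u u' by (metis atLeastAtMost_iff)
        hence "i = i'" using eq c_inj by auto
        thus ?thesis using i i' by auto
      qed
    qed
  next
    show "\<forall>u\<in>{1..k + 1}. \<forall>v\<in>{1..k + 1}. ?A u \<noteq> ?C v \<and> \<not> E (?A u) (?A v) \<and>
       \<not> E (?C u) (?C v) \<and> (E (?A u) (?C v) \<longleftrightarrow> v \<le> u)"
    proof (intro ballI)
      fix u v assume u: "u \<in> {1..k+1}" and v: "v \<in> {1..k+1}"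
      have A_cases: "(?A u = x \<and> u = p) \<or> (\<exists>i. 1 \<le> i \<and> i \<le> k \<and> ?A u = a i \<and> u = (if i < p then i else i + 1))"
        using Ar[of u] u Ap by (cases "u = p") auto
      have A_cases': "(?A v = x \<and> v = p) \<or> (\<exists>i. 1 \<le> i \<and> i \<le> k \<and> ?A v = a i \<and> v = (if i < p then i else i + 1))"
        using Ar[of v] v Ap by (cases "v = p") auto
      have C_cases: "(?C v = w \<and> v = q) \<or> (\<exists>j. 1 \<le> j \<and> j \<le> k \<and> ?C v = c j \<and> v = (if j < q then j else j + 1))"
        using Cr[of v] v Cq by (cases "v = q") auto
      have C_cases': "(?C u = w \<and> u = q) \<or> (\<exists>j. 1 \<le> j \<and> j \<le> k \<and> ?C u = c j \<and> u = (if j < q then j else j + 1))"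
        using Cr[of u] u Cq by (cases "u = q") auto
      have 1: "?A u \<noteq> ?C v"
      proof -
        { assume "?A u = x" "?C v = w" hence ?thesis using w(3) by auto }
        moreover
        { fix i assume "1 \<le> i" "i \<le> k" "?A u = a i" "?C v = w" hence ?thesis using xne(3)[of i] by auto }
        moreover
        { fix j assume "1 \<le> j" "j \<le> k" "?A u = x" "?C v = c j" hence ?thesis using xne(2)[of j] by auto }
        moreover
        { fix i j assume "1 \<le> i" "i \<le> k" "1 \<le> j" "j \<le> k" "?A u = a i" "?C v = c j"
          hence ?thesis using ac_neq[of i j] by auto }
        ultimately show ?thesis using A_cases C_cases by blast
      qed
      have 2: "\<not> E (?A u) (?A v)" using A_cases A_cases' xa aa Ecomm[of _ x] by auto
      have 3: "\<not> E (?C u) (?C v)" using C_cases C_cases' wc cc Ecomm[of _ w] by auto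
      have 4: "E (?A u) (?C v) \<longleftrightarrow> v \<le> u"
        using A_cases
      proof
        assume "?A u = x \<and> u = p"
        thus ?thesis using C_cases xw xc by auto
      next
        assume "\<exists>i. 1 \<le> i \<and> i \<le> k \<and> ?A u = a i \<and> u = (if i < p then i else i + 1)"
        then obtain i where i: "1 \<le> i" "i \<le> k" "?A u = a i" "u = (if i < p then i else i + 1)" by blast
        show ?thesis using C_cases
        proof
          assume "?C v = w \<and> v = q"
          thus ?thesis using aw[OF i(1,2)] i by auto
        next
          assume "\<exists>j. 1 \<le> j \<and> j \<le> k \<and> ?C v = c j \<and> v = (if j < q then j else j + 1)"
          then obtain j where j: "1 \<le> j" "j \<le> k" "?C v = c j" "v = (if j < q then j else j + 1)" by blast
          have "E (a i) (c j) \<longleftrightarrow> j \<le> i" using ac i j by auto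
          moreover have "j \<le> i \<longleftrightarrow> v \<le> u" using i(4) j(4) q by auto
          ultimately show ?thesis using i j by auto
        qed
      qed
      show "?A u \<noteq> ?C v \<and> \<not> E (?A u) (?A v) \<and> \<not> E (?C u) (?C v) \<and> (E (?A u) (?C v) \<longleftrightarrow> v \<le> u)"
        using 1 2 3 4 by blast
    qed
  qed
qed

end


context chs begin

definition "ftwin y h \<longleftrightarrow> twin y h \<and> \<not> E y h"

lemma twin_a:
  assumes "twin y (a u)" "1 \<le> u" "u \<le> k" "1 \<le> i" "i \<le> k" "i \<noteq> u"
  shows "\<not> E y (a i)"
  using twinD(4)[OF assms(1) aH[OF assms(4,5)]] a_inj[of i u] aa[of u i] assms by auto

lemma twin_ac:
  assumes "twin y (a u)" "1 \<le> u" "u \<le> k" "1 \<le> j" "j \<le> k"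
  shows "E y (c j) \<longleftrightarrow> j \<le> u"
  using twinD(4)[OF assms(1) cH[OF assms(4,5)]] ca_neq[of u j] ac[of u j] assms by auto

lemma twin_c:
  assumes "twin y (c u)" "1 \<le> u" "u \<le> k" "1 \<le> j" "j \<le> k" "j \<noteq> u"
  shows "\<not> E y (c j)"
  using twinD(4)[OF assms(1) cH[OF assms(4,5)]] c_inj[of j u] cc[of u j] assms by auto

lemma twin_ca:
  assumes "twin y (c u)" "1 \<le> u" "u \<le> k" "1 \<le> i" "i \<le> k"
  shows "E y (a i) \<longleftrightarrow> u \<le> i"
  using twinD(4)[OF assms(1) aH[OF assms(4,5)]] ac_neq[of i u] ca[of i u] assms by auto

lemma ftwin_a: "ftwin y (a u) \<Longrightarrow> 1 \<le> u \<Longrightarrow> u \<le> k \<Longrightarrow> 1 \<le> i \<Longrightarrow> i \<le> k \<Longrightarrow> \<not> E y (a i)"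
  unfolding ftwin_def using twin_a by (cases "i = u") auto

lemma ftwin_c: "ftwin y (c u) \<Longrightarrow> 1 \<le> u \<Longrightarrow> u \<le> k \<Longrightarrow> 1 \<le> j \<Longrightarrow> j \<le> k \<Longrightarrow> \<not> E y (c j)"
  unfolding ftwin_def using twin_c by (cases "j = u") auto

lemma C_alpha:
  assumes ya: "ftwin ya (a u)" and yc: "ftwin yc (c (u+1))" and e: "E ya yc" and u: "1 \<le> u" "u < k"
  shows "\<exists>a' c'. chain_str V E (k+1) a' c'"
proof -
  have tw: "twin ya (a u)" "twin yc (c (u+1))" using ya yc unfolding ftwin_def by auto
  have "chain_str V E (k+1) (ins a (u+1) ya) (ins c (u+1) yc)"
  proof (rule insert_chain)
    show "1 \<le> u + 1" "u + 1 \<le> k + 1" "u + 1 \<le> u + 1" "u + 1 \<le> u + 1 + 1" "u + 1 \<le> k + 1" using u by auto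
    show "ya \<in> V" "ya \<notin> H" "yc \<in> V" "yc \<notin> H" using twinD tw by auto
    show "ya \<noteq> yc" using e by auto
    show "\<not> E ya (a i)" if "1 \<le> i" "i \<le> k" for i using ftwin_a[OF ya] u that by auto
    show "\<not> E yc (c j)" if "1 \<le> j" "j \<le> k" for j using ftwin_c[OF yc] u that by auto
    show "E ya yc \<longleftrightarrow> u + 1 \<le> u + 1" using e by auto
    show "E ya (c j) \<longleftrightarrow> (if j < u + 1 then j else j + 1) \<le> u + 1" if "1 \<le> j" "j \<le> k" for j
      using twin_ac[OF tw(1)] u that by auto
    show "E (a i) yc \<longleftrightarrow> u + 1 \<le> (if i < u + 1 then i else i + 1)" if "1 \<le> i" "i \<le> k" for i
      using twin_ca[OF tw(2), of i] u that Ecomm[of "a i" yc] by auto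
  qed
  thus ?thesis by blast
qed

lemma C_beta:
  assumes ya: "ftwin ya (a u)" and yc: "ftwin yc (c u)" and e: "\<not> E ya yc" "ya \<noteq> yc" and u: "1 \<le> u" "u \<le> k"
  shows "\<exists>a' c'. chain_str V E (k+1) a' c'"
proof -
  have tw: "twin ya (a u)" "twin yc (c u)" using ya yc unfolding ftwin_def by auto
  have "chain_str V E (k+1) (ins a u ya) (ins c (u+1) yc)"
  proof (rule insert_chain)
    show "1 \<le> u" "u \<le> k + 1" "u \<le> u + 1" "u + 1 \<le> u + 1" "u + 1 \<le> k + 1" using u by auto
    show "ya \<in> V" "ya \<notin> H" "yc \<in> V" "yc \<notin> H" using twinD tw by auto
    show "ya \<noteq> yc" using e by auto
    show "\<not> E ya (a i)" if "1 \<le> i" "i \<le> k" for i using ftwin_a[OF ya] u that by auto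
    show "\<not> E yc (c j)" if "1 \<le> j" "j \<le> k" for j using ftwin_c[OF yc] u that by auto
    show "E ya yc \<longleftrightarrow> u + 1 \<le> u" using e by auto
    show "E ya (c j) \<longleftrightarrow> (if j < u + 1 then j else j + 1) \<le> u" if "1 \<le> j" "j \<le> k" for j
      using twin_ac[OF tw(1)] u that by auto
    show "E (a i) yc \<longleftrightarrow> u + 1 \<le> (if i < u then i else i + 1)" if "1 \<le> i" "i \<le> k" for i
      using twin_ca[OF tw(2), of i] u that Ecomm[of "a i" yc] by auto
  qed
  thus ?thesis by blast
qed

lemma C_gamma:
  assumes y: "ftwin y (a k)" and z: "z \<in> V" "z \<notin> H" "\<forall>w\<in>H. \<not> E z w" and e: "E z y" and k: "1 \<le> k"
  shows "\<exists>a' c'. chain_str V E (k+1) a' c'"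
proof -
  have tw: "twin y (a k)" using y unfolding ftwin_def by auto
  have "chain_str V E (k+1) (ins a (k+1) y) (ins c (k+1) z)"
  proof (rule insert_chain)
    show "1 \<le> k + 1" "k + 1 \<le> k + 1" "k + 1 \<le> k + 1" "k + 1 \<le> k + 1 + 1" "k + 1 \<le> k + 1" by auto
    show "y \<in> V" "y \<notin> H" using twinD tw by auto
    show "z \<in> V" "z \<notin> H" using z by auto
    show "y \<noteq> z" using e by auto
    show "\<not> E y (a i)" if "1 \<le> i" "i \<le> k" for i using ftwin_a[OF y] k that by auto
    show "\<not> E z (c j)" if "1 \<le> j" "j \<le> k" for j using z(3) cH that by auto
    show "E y z \<longleftrightarrow> k + 1 \<le> k + 1" using e Ecomm by auto
    show "E y (c j) \<longleftrightarrow> (if j < k + 1 then j else j + 1) \<le> k + 1" if "1 \<le> j" "j \<le> k" for j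
      using twin_ac[OF tw] k that by auto
    show "E (a i) z \<longleftrightarrow> k + 1 \<le> (if i < k + 1 then i else i + 1)" if "1 \<le> i" "i \<le> k" for i
      using z(3) aH[OF that] Ecomm[of "a i" z] that by auto
  qed
  thus ?thesis by blast
qed

lemma C_delta:
  assumes y: "ftwin y (c 1)" and z: "z \<in> V" "z \<notin> H" "\<forall>w\<in>H. \<not> E z w" and e: "E z y" and k: "1 \<le> k"
  shows "\<exists>a' c'. chain_str V E (k+1) a' c'"
proof -
  have tw: "twin y (c 1)" using y unfolding ftwin_def by auto
  have "chain_str V E (k+1) (ins a 1 z) (ins c 1 y)"
  proof (rule insert_chain)
    show "1 \<le> (1::nat)" "1 \<le> k + 1" "1 \<le> (1::nat)" "(1::nat) \<le> 1 + 1" "1 \<le> k + 1" by auto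
    show "y \<in> V" "y \<notin> H" using twinD tw by auto
    show "z \<in> V" "z \<notin> H" using z by auto
    show "z \<noteq> y" using e by auto
    show "\<not> E z (a i)" if "1 \<le> i" "i \<le> k" for i using z(3) aH that by auto
    show "\<not> E y (c j)" if "1 \<le> j" "j \<le> k" for j using ftwin_c[OF y] k that by auto
    show "E z y \<longleftrightarrow> 1 \<le> (1::nat)" using e by auto
    show "E z (c j) \<longleftrightarrow> (if j < 1 then j else j + 1) \<le> 1" if "1 \<le> j" "j \<le> k" for j
      using z(3) cH[OF that] that by auto
    show "E (a i) y \<longleftrightarrow> 1 \<le> (if i < 1 then i else i + 1)" if "1 \<le> i" "i \<le> k" for i
      using twin_ca[OF tw, of i] k that Ecomm[of "a i" y] by auto
  qed
  thus ?thesis by blast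
qed

lemma H_two: "1 \<le> k \<Longrightarrow> h \<in> H \<Longrightarrow> \<exists>w\<in>H. w \<noteq> h"
  using aH[of 1] cH[of 1] ac_neq[of 1 1] by (metis le_refl)

lemma FA_anti:
  assumes k: "2 \<le> k" and z: "z \<in> V" "z \<notin> H" "\<forall>w\<in>H. \<not> E z w" and tw: "twin y h" and e: "E z y"
    and nomax: "\<And>a' c'. \<not> chain_str V E (k+1) a' c'"
  shows False
proof -
  have zy: "z \<noteq> y" using e by auto
  have hH: "h \<in> H" and yH: "y \<notin> H" and yV: "y \<in> V" using twinD tw by auto
  obtain w0 where w0: "w0 \<in> H" "w0 \<noteq> h" using H_two[OF _ hH] k by auto
  from replS[OF tw z(1,2) zy]
  consider (C) "\<forall>w\<in>insert y (H - {h}). E z w" | (N) "\<forall>w\<in>insert y (H - {h}). \<not> E z w"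
    | (T) g where "g \<in> insert y (H - {h})" "\<forall>w\<in>insert y (H - {h}) - {g}. E z w \<longleftrightarrow> E g w" by blast
  thus False
  proof cases
    case C thus False using w0 z(3) by auto
  next
    case N thus False using e by auto
  next
    case T
    show False
    proof (cases "g = y")
      case True
      have "\<not> E h w" if "w \<in> H" "w \<noteq> h" for w
        using T(2) True that yH z(3) twinD(4)[OF tw that] by auto
      moreover obtain w where "w \<in> H" "E h w" using D0b[OF _ hH] k by auto
      ultimately show False by (metis Eirr)
    next
      case False
      hence gH: "g \<in> H" "g \<noteq> h" using T(1) by auto
      have "E g y" using T(2) False e by auto
      hence "E h g" using twinD(4)[OF tw gH] Ecomm by auto
      hence Egh: "E g h" using Ecomm by auto
      have "\<forall>w\<in>H - {g, h}. \<not> E g w" using T(2) z(3) yH by auto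
      from D2[OF gH(1) hH Egh this]
      show False
      proof
        assume gh: "g = a 1 \<and> h = c 1"
        show False
        proof (cases "E y (c 1)")
          case True
          have tw1: "twin y (c 1)" using tw gh by auto
          show False
          proof (rule no_bull[of y "a k" "c 1" z "c 2"])
            show "y \<in> V" "a k \<in> V" "c 1 \<in> V" "z \<in> V" "c 2 \<in> V" using yV aV cV z k by auto
            have "y \<noteq> a k" "y \<noteq> c 1" "y \<noteq> c 2" "z \<noteq> a k" "z \<noteq> c 1" "z \<noteq> c 2"
              using notH[OF yH] notH[OF z(2)] k by auto
            moreover have "a k \<noteq> c 1" "a k \<noteq> c 2" "c 1 \<noteq> c 2" using ac_neq c_inj k by auto
            ultimately show "distinct [y, a k, c 1, z, c 2]" using zy by auto
            show "E y (a k)" using twin_ca[OF tw1, of k] k by auto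
            show "E (a k) (c 1)" "E (a k) (c 2)" using ac k by auto
            show "E y (c 1)" by (rule True)
            show "E y z" using e Ecomm by auto
            show "\<not> E y (c 2)" using twin_c[OF tw1, of 2] k by auto
            show "\<not> E (a k) z" "\<not> E (c 1) z" "\<not> E z (c 2)" using z(3) aH cH k Ecomm by auto
            show "\<not> E (c 1) (c 2)" using cc k by auto
          qed
        next
          case False
          hence "ftwin y (c 1)" using tw gh unfolding ftwin_def by auto
          thus False using C_delta[OF _ z e] nomax k by auto
        qed
      next
        assume gh: "g = c k \<and> h = a k"
        show False
        proof (cases "E y (a k)")
          case True
          have tw1: "twin y (a k)" using tw gh by auto
          have km: "1 \<le> k - 1" "k - 1 \<le> k" "k - 1 \<noteq> k" using k by auto
          show False
          proof (rule no_bull[of y "c 1" "a k" z "a (k - 1)"])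
            show "y \<in> V" "c 1 \<in> V" "a k \<in> V" "z \<in> V" "a (k - 1) \<in> V" using yV aV cV z k km by auto
            have "y \<noteq> a k" "y \<noteq> c 1" "y \<noteq> a (k - 1)" "z \<noteq> a k" "z \<noteq> c 1" "z \<noteq> a (k - 1)"
              using notH[OF yH] notH[OF z(2)] k km by auto
            moreover have "c 1 \<noteq> a k" "c 1 \<noteq> a (k - 1)" "a k \<noteq> a (k - 1)"
              using ca_neq a_inj[of k "k - 1"] k km by auto
            ultimately show "distinct [y, c 1, a k, z, a (k - 1)]" using zy by auto
            show "E y (c 1)" using twin_ac[OF tw1, of 1] k by auto
            show "E (c 1) (a k)" "E (c 1) (a (k - 1))" using ca k km by auto
            show "E y (a k)" by (rule True)
            show "E y z" using e Ecomm by auto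
            show "\<not> E y (a (k - 1))" using twin_a[OF tw1, of "k - 1"] k km by auto
            show "\<not> E (c 1) z" "\<not> E (a k) z" "\<not> E z (a (k - 1))" using z(3) aH cH k km Ecomm by auto
            show "\<not> E (a k) (a (k - 1))" using aa k km by auto
          qed
        next
          case False
          hence "ftwin y (a k)" using tw gh unfolding ftwin_def by auto
          thus False using C_gamma[OF _ z e] nomax k by auto
        qed
      qed
    qed
  qed
qed

lemma FA_comp:
  assumes k: "3 \<le> k" and z: "z \<in> V" "z \<notin> H" "\<forall>w\<in>H. E z w" and tw: "twin y h" and e: "\<not> E z y"
    and zy: "z \<noteq> y"
  shows False
proof -
  have hH: "h \<in> H" and yH: "y \<notin> H" and yV: "y \<in> V" using twinD tw by auto
  obtain w0 where w0: "w0 \<in> H" "w0 \<noteq> h" using H_two[OF _ hH] k by auto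
  from replS[OF tw z(1,2) zy]
  consider (C) "\<forall>w\<in>insert y (H - {h}). E z w" | (N) "\<forall>w\<in>insert y (H - {h}). \<not> E z w"
    | (T) g where "g \<in> insert y (H - {h})" "\<forall>w\<in>insert y (H - {h}) - {g}. E z w \<longleftrightarrow> E g w" by blast
  thus False
  proof cases
    case C thus False using e by auto
  next
    case N thus False using w0 z(3) by auto
  next
    case T
    show False
    proof (cases "g = y")
      case True
      have "E h w" if "w \<in> H" "w \<noteq> h" for w
        using T(2) True that yH z(3) twinD(4)[OF tw that] by auto
      moreover obtain w where "w \<in> H - {h}" "\<not> E h w" using D0a[OF _ hH] k by auto
      ultimately show False by auto
    next
      case False
      hence gH: "g \<in> H" "g \<noteq> h" using T(1) by auto
      have "\<forall>w\<in>H - {g, h}. E g w" using T(2) z(3) yH by auto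
      thus False using D1[OF k gH(1) hH] by auto
    qed
  qed
qed

definition "rel h' h e \<longleftrightarrow>
  (\<exists>u. 1 \<le> u \<and> u \<le> k \<and> ((h' = a u \<and> h = c u \<and> \<not> e) \<or> (h' = c u \<and> h = a u \<and> \<not> e))) \<or>
  (\<exists>u. 1 \<le> u \<and> u < k \<and> ((h' = a u \<and> h = c (u+1) \<and> e) \<or> (h' = c (u+1) \<and> h = a u \<and> e)))"

lemma FB_half:
  assumes k: "2 \<le> k" and tw: "twin y h" and tw': "twin y' h'" and ne: "h \<noteq> h'" "y \<noteq> y'"
    and d: "E y y' \<noteq> E h h'"
  shows "(\<not> E y' h' \<and> rel h' h (E y y')) \<or> (k = 2 \<and> E y' h')"
proof -
  have hH: "h \<in> H" and yH: "y \<notin> H" and yV: "y \<in> V" using twinD tw by auto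
  have hH': "h' \<in> H" and yH': "y' \<notin> H" and yV': "y' \<in> V" using twinD tw' by auto
  have yy: "y' \<noteq> y" using ne by auto
  have T1: "E y' w \<longleftrightarrow> E h' w" if "w \<in> H" "w \<noteq> h'" for w using twinD(4)[OF tw' that] .
  have T0: "E y w \<longleftrightarrow> E h w" if "w \<in> H" "w \<noteq> h" for w using twinD(4)[OF tw that] .
  have eyy: "E y' y \<longleftrightarrow> E y y'" using Ecomm by auto
  from replS[OF tw yV' yH' yy]
  consider (C) "\<forall>w\<in>insert y (H - {h}). E y' w" | (N) "\<forall>w\<in>insert y (H - {h}). \<not> E y' w"
    | (T) g where "g \<in> insert y (H - {h})" "\<forall>w\<in>insert y (H - {h}) - {g}. E y' w \<longleftrightarrow> E g w" by blast
  thus ?thesis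
  proof cases
    case C
    have "E y' h'" using C hH' ne by auto
    moreover have "k = 2"
    proof (rule ccontr)
      assume "k \<noteq> 2"
      hence "3 \<le> k" using k by auto
      have "\<forall>w\<in>H - {h', h}. E h' w" using C T1 by auto
      thus False using D1[OF \<open>3 \<le> k\<close> hH' hH] by auto
    qed
    ultimately show ?thesis by auto
  next
    case N
    have n1: "\<not> E y' h'" "\<not> E y' y" using N hH' ne by auto
    hence "E h h'" using d eyy by auto
    hence Eh: "E h' h" using Ecomm by auto
    have "\<forall>w\<in>H - {h', h}. \<not> E h' w" using N T1 by auto
    from D2[OF hH' hH Eh this]
    have "rel h' h (E y y')"
    proof
      assume "h' = a 1 \<and> h = c 1"
      thus ?thesis unfolding rel_def using n1 eyy k by (intro disjI1 exI[of _ 1]) auto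
    next
      assume "h' = c k \<and> h = a k"
      thus ?thesis unfolding rel_def using n1 eyy k by (intro disjI1 exI[of _ k]) auto
    qed
    thus ?thesis using n1 by auto
  next
    case T
    show ?thesis
    proof (cases "g = y")
      case True
      have "\<forall>w\<in>H - {h, h'}. E h w \<longleftrightarrow> E h' w"
      proof
        fix w assume w: "w \<in> H - {h, h'}"
        hence "E y' w \<longleftrightarrow> E y w" using T(2) True yH by auto
        thus "E h w \<longleftrightarrow> E h' w" using T0 T1 w by auto
      qed
      thus ?thesis using D3[OF k hH hH' ne(1)] by auto
    next
      case gy: False
      show ?thesis
      proof (cases "g = h'")
        case True
        have "y \<noteq> h'" using yH hH' by auto
        hence "E y' y \<longleftrightarrow> E h' y" using T(2) True yy by auto
        moreover have "E h' y \<longleftrightarrow> E h h'" using T0[OF hH' ne(1)[symmetric]] Ecomm by auto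
        ultimately show ?thesis using d eyy by auto
      next
        case gh: False
        have gH: "g \<in> H" "g \<noteq> h" using T(1) gy by auto
        have ag: "\<forall>w\<in>H - {h, h', g}. E h' w \<longleftrightarrow> E g w"
        proof
          fix w assume w: "w \<in> H - {h, h', g}"
          hence "E y' w \<longleftrightarrow> E g w" using T(2) yH by auto
          thus "E h' w \<longleftrightarrow> E g w" using T1 w by auto
        qed
        have ii: "E y y' \<longleftrightarrow> E g h"
          using T(2) gy yH eyy T0[OF gH] Ecomm[of y g] Ecomm[of g h] by auto
        have iii: "E y' h' \<longleftrightarrow> E g h'" using T(2) hH' ne gh by auto
        have cr: "crel h' g h" by (rule D4[OF k hH' gH(1) hH]) (use gh gH ne ag in auto)
        have cr': "(\<exists>u. 1 \<le> u \<and> u < k \<and> h = c (u+1) \<and> ((h' = a u \<and> g = a (u+1)) \<or> (h' = a (u+1) \<and> g = a u))) \<or>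
          (\<exists>v. 1 \<le> v \<and> v < k \<and> h = a v \<and> ((h' = c v \<and> g = c (v+1)) \<or> (h' = c (v+1) \<and> g = c v))) \<or>
          (k = 2 \<and> E h' g)" using cr unfolding crel_def by blast
        show ?thesis using cr'
        proof (elim disjE)
          assume "\<exists>u. 1 \<le> u \<and> u < k \<and> h = c (u+1) \<and> ((h' = a u \<and> g = a (u+1)) \<or> (h' = a (u+1) \<and> g = a u))"
          then obtain u where u: "1 \<le> u" "u < k" and hc: "h = c (u+1)"
            and o: "(h' = a u \<and> g = a (u+1)) \<or> (h' = a (u+1) \<and> g = a u)" by blast
          show ?thesis using o
          proof
            assume hg: "h' = a u \<and> g = a (u+1)"
            have "\<not> E y' h'" using iii hg aa[of "u+1" u] u by auto
            moreover have "E y y'" using ii hg hc ac[of "u+1" "u+1"] u by auto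
            ultimately show ?thesis unfolding rel_def using hg hc u by auto
          next
            assume hg: "h' = a (u+1) \<and> g = a u"
            have "\<not> E y' h'" using iii hg aa[of u "u+1"] u by auto
            moreover have "\<not> E y y'" using ii hg hc ac[of u "u+1"] u by auto
            moreover have "\<exists>u'. 1 \<le> u' \<and> u' \<le> k \<and> h' = a u' \<and> h = c u'" using hg hc u by (intro exI[of _ "u+1"]) auto
            ultimately show ?thesis unfolding rel_def by blast
          qed
        next
          assume "\<exists>v. 1 \<le> v \<and> v < k \<and> h = a v \<and> ((h' = c v \<and> g = c (v+1)) \<or> (h' = c (v+1) \<and> g = c v))"
          then obtain v where v: "1 \<le> v" "v < k" and ha: "h = a v"
            and o: "(h' = c v \<and> g = c (v+1)) \<or> (h' = c (v+1) \<and> g = c v)" by blast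
          show ?thesis using o
          proof
            assume hg: "h' = c v \<and> g = c (v+1)"
            have "\<not> E y' h'" using iii hg cc[of "v+1" v] v by auto
            moreover have "\<not> E y y'" using ii hg ha ca[of v "v+1"] v by auto
            ultimately show ?thesis unfolding rel_def using hg ha v by auto
          next
            assume hg: "h' = c (v+1) \<and> g = c v"
            have "\<not> E y' h'" using iii hg cc[of v "v+1"] v by auto
            moreover have "E y y'" using ii hg ha ca[of v v] v by auto
            ultimately show ?thesis unfolding rel_def using hg ha v by auto
          qed
        next
          assume "k = 2 \<and> E h' g"
          thus ?thesis using iii Ecomm by auto
        qed
      qed
    qed
  qed
qed

lemma FB_final:
  assumes tw: "twin y h" and tw': "twin y' h'" and ne: "y \<noteq> y'"
    and f: "\<not> E y h" "\<not> E y' h'" and r: "rel h' h (E y y')"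
  shows "\<exists>a' c'. chain_str V E (k+1) a' c'"
  using r unfolding rel_def
proof (elim disjE exE conjE)
  fix u assume u: "1 \<le> u" "u \<le> k" "h' = a u" "h = c u" "\<not> E y y'"
  show ?thesis by (rule C_beta[of y' u y]) (use u tw tw' f ne Ecomm in \<open>auto simp: ftwin_def\<close>)
next
  fix u assume u: "1 \<le> u" "u \<le> k" "h' = c u" "h = a u" "\<not> E y y'"
  show ?thesis by (rule C_beta[of y u y']) (use u tw tw' f ne Ecomm in \<open>auto simp: ftwin_def\<close>)
next
  fix u assume u: "1 \<le> u" "u < k" "h' = a u" "h = c (u+1)" "E y y'"
  show ?thesis by (rule C_alpha[of y' u y]) (use u tw tw' f ne Ecomm in \<open>auto simp: ftwin_def\<close>)
next
  fix u assume u: "1 \<le> u" "u < k" "h' = c (u+1)" "h = a u" "E y y'"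
  show ?thesis by (rule C_alpha[of y u y']) (use u tw tw' f ne Ecomm in \<open>auto simp: ftwin_def\<close>)
qed

end


context chs begin

lemma compl_iff: "x \<in> V \<Longrightarrow> y \<in> V \<Longrightarrow> x \<noteq> y \<Longrightarrow> compl_edges V E x y \<longleftrightarrow> \<not> E x y"
  unfolding compl_edges_def by auto

lemma twin_compl:
  assumes J: "chs V (compl_edges V E) k' a' c'" and JH: "chs.H k' a' c' = H"
  shows "chs.twin V (compl_edges V E) k' a' c' y h \<longleftrightarrow> twin y h"
proof -
  have eq: "(compl_edges V E y w \<longleftrightarrow> compl_edges V E h w) \<longleftrightarrow> (E y w \<longleftrightarrow> E h w)"
    if "y \<in> V - H" "h \<in> H" "w \<in> H - {h}" for w
  proof -
    have "y \<noteq> w" "h \<noteq> w" "y \<in> V" "w \<in> V" "h \<in> V" using that HV by auto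
    thus ?thesis using compl_iff by simp
  qed
  show ?thesis unfolding chs.twin_def[OF J] twin_def JH using eq by blast
qed

definition "a2 = (\<lambda>i::nat. if i = 1 then a 2 else c 2)"
definition "c2 = (\<lambda>i::nat. if i = 1 then a 1 else c 1)"

lemma k2_facts:
  assumes "k = 2"
  shows "a 1 \<in> V" "a 2 \<in> V" "c 1 \<in> V" "c 2 \<in> V"
    "a 1 \<noteq> a 2" "a 1 \<noteq> c 1" "a 1 \<noteq> c 2" "a 2 \<noteq> c 1" "a 2 \<noteq> c 2" "c 1 \<noteq> c 2"
    "E (a 1) (c 1)" "E (a 2) (c 1)" "E (a 2) (c 2)" "\<not> E (a 1) (c 2)" "\<not> E (a 1) (a 2)" "\<not> E (c 1) (c 2)"
  using assms aV cV a_inj[of 1 2] c_inj[of 1 2] ac_neq ac aa cc by auto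

lemma co2:
  assumes "k = 2"
  shows "chs V (compl_edges V E) 2 a2 c2"
proof -
  note f = k2_facts[OF assms]
  have fs: "E (c 1) (a 1)" "E (c 1) (a 2)" "E (c 2) (a 2)" "\<not> E (c 2) (a 1)" "\<not> E (a 2) (a 1)" "\<not> E (c 2) (c 1)"
    using f Ecomm by auto
  have two: "{1..2::nat} = {1,2}" by auto
  have "chain_str V (compl_edges V E) 2 a2 c2"
    unfolding chain_str_def two a2_def c2_def inj_on_def compl_edges_def
    using f fs by auto
  thus ?thesis unfolding chs_def chs_axioms_def using compl_fgraph by blast
qed

lemma co2_H:
  assumes "k = 2"
  shows "chs.H 2 a2 c2 = H"
proof -
  interpret J: chs V "compl_edges V E" 2 a2 c2 by (rule co2[OF assms])
  have two: "{1..2::nat} = {1,2}" by auto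
  have "k = 2" by (rule assms)
  have "J.H = H" unfolding J.H_def H_def using assms two by (auto simp: a2_def c2_def)
  thus ?thesis .
qed

lemma k2_incompat:
  assumes k: "k = 2" and r: "rel x x' e" and r': "chs.rel 2 a2 c2 x' x (\<not> e)"
  shows False
proof -
  note f = k2_facts[OF k]
  interpret J: chs V "compl_edges V E" 2 a2 c2 by (rule co2[OF k])
  have f2: "a 2 \<noteq> a 1" "c 1 \<noteq> a 1" "c 2 \<noteq> a 1" "c 1 \<noteq> a 2" "c 2 \<noteq> a 2" "c 2 \<noteq> c 1"
    using f by auto
  have a2v: "a2 1 = a 2" "a2 2 = c 2" "c2 1 = a 1" "c2 2 = c 1" unfolding a2_def c2_def by auto
  have u12: "\<And>u::nat. 1 \<le> u \<Longrightarrow> u \<le> 2 \<Longrightarrow> u = 1 \<or> u = 2" by auto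
  have r3: "(x' = a 2 \<and> x = a 1 \<and> e) \<or> (x' = c 2 \<and> x = c 1 \<and> e) \<or> (x' = a 1 \<and> x = a 2 \<and> e) \<or>
     (x' = c 1 \<and> x = c 2 \<and> e) \<or> (x' = a 2 \<and> x = c 1 \<and> \<not> e) \<or> (x' = c 1 \<and> x = a 2 \<and> \<not> e)"
  proof -
    from r'[unfolded J.rel_def]
    consider (A) u where "1 \<le> u" "u \<le> 2" "(x' = a2 u \<and> x = c2 u \<and> e) \<or> (x' = c2 u \<and> x = a2 u \<and> e)"
      | (B) u where "1 \<le> u" "u < 2" "(x' = a2 u \<and> x = c2 (u+1) \<and> \<not> e) \<or> (x' = c2 (u+1) \<and> x = a2 u \<and> \<not> e)"
      by auto
    thus ?thesis
    proof cases
      case A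
      from u12[OF A(1,2)] show ?thesis
      proof
        assume "u = 1" thus ?thesis using A(3) a2v by auto
      next
        assume "u = 2" thus ?thesis using A(3) a2v by auto
      qed
    next
      case B
      hence "u = 1" by auto
      moreover have "c2 (1+1) = c 1" unfolding c2_def by simp
      ultimately show ?thesis using B(3) a2v by auto
    qed
  qed
  have r4: "(x = a 1 \<and> x' = c 1 \<and> \<not> e) \<or> (x = a 2 \<and> x' = c 2 \<and> \<not> e) \<or> (x = c 1 \<and> x' = a 1 \<and> \<not> e) \<or>
     (x = c 2 \<and> x' = a 2 \<and> \<not> e) \<or> (x = a 1 \<and> x' = c 2 \<and> e) \<or> (x = c 2 \<and> x' = a 1 \<and> e)"
  proof -
    from r[unfolded rel_def]
    consider (A) u where "1 \<le> u" "u \<le> k" "(x = a u \<and> x' = c u \<and> \<not> e) \<or> (x = c u \<and> x' = a u \<and> \<not> e)"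
      | (B) u where "1 \<le> u" "u < k" "(x = a u \<and> x' = c (u+1) \<and> e) \<or> (x = c (u+1) \<and> x' = a u \<and> e)"
      by auto
    thus ?thesis
    proof cases
      case A
      have "u = 1 \<or> u = 2" using u12[of u] A(1,2) k by auto
      thus ?thesis
      proof
        assume "u = 1" thus ?thesis using A(3) by auto
      next
        assume "u = 2" thus ?thesis using A(3) by auto
      qed
    next
      case B
      hence u1: "u = 1" using k by auto
      have h: "c (u+1) = c 2" "a u = a 1" using u1 by (simp_all add: numeral_2_eq_2)
      show ?thesis using B(3)[unfolded h] by auto
    qed
  qed
  from r4 show False
  proof (elim disjE conjE)
  qed (use r3 f f2 in auto)
qed

lemma main_lemma:
  assumes k: "2 \<le> k" and pr: "prime_graph V E"
    and nomax: "\<And>a' c'. \<not> chain_str V E (k+1) a' c'"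
    and nomaxc: "\<And>a' c'. \<not> chain_str V (compl_edges V E) (k+1) a' c'"
  shows "V = H"
proof (rule ccontr)
  assume VH: "V \<noteq> H"
  define T where "T = {y. \<exists>h. twin y h}"
  define Out where "Out = (V - H) - T"
  have TV: "T \<subseteq> V - H" unfolding T_def twin_def by auto
  have OutS: "(\<forall>w\<in>H. E z w) \<or> (\<forall>w\<in>H. \<not> E z w)" if "z \<in> Out" for z
    using S[of z] that unfolding Out_def T_def by auto
  have cE: "compl_edges V E x y \<longleftrightarrow> \<not> E x y" if "x \<in> V" "y \<in> V" "x \<noteq> y" for x y
    using compl_iff that by auto
  have FA: "E z y \<longleftrightarrow> E z h" if z: "z \<in> Out" and tw: "twin y h" for z y h
  proof -
    have zV: "z \<in> V" "z \<notin> H" "z \<notin> T" using z unfolding Out_def by auto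
    have zy: "z \<noteq> y" using zV(3) tw unfolding T_def by auto
    have hH: "h \<in> H" and yV: "y \<in> V" using twinD tw by auto
    from OutS[OF z] show ?thesis
    proof
      assume comp: "\<forall>w\<in>H. E z w"
      have "E z y"
      proof (rule ccontr)
        assume ne: "\<not> E z y"
        show False
        proof (cases "k = 2")
          case False thus False using FA_comp[OF _ zV(1,2) comp tw ne zy] k by auto
        next
          case True
          interpret J: chs V "compl_edges V E" 2 a2 c2 by (rule co2[OF True])
          have JH: "J.H = H" using co2_H[OF True] .
          have Jtw: "J.twin y h" using twin_compl[OF co2[OF True] co2_H[OF True]] tw by auto
          have anti: "\<forall>w\<in>J.H. \<not> compl_edges V E z w" using comp JH unfolding compl_edges_def by auto
          have czy: "compl_edges V E z y" using cE[OF zV(1) yV zy] ne by auto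
          have nm: "\<And>a' c'. \<not> chain_str V (compl_edges V E) (2+1) a' c'" using nomaxc True by auto
          show False using J.FA_anti[OF _ zV(1) _ anti Jtw czy nm] zV JH by auto
        qed
      qed
      thus ?thesis using comp hH by auto
    next
      assume anti: "\<forall>w\<in>H. \<not> E z w"
      have "\<not> E z y" using FA_anti[OF k zV(1,2) anti tw _ nomax] by auto
      thus ?thesis using anti hH by auto
    qed
  qed
  have FB: "E y y' \<longleftrightarrow> E h h'" if tw: "twin y h" and tw': "twin y' h'" and ne: "h \<noteq> h'" "y \<noteq> y'" for y y' h h'
  proof (rule ccontr)
    assume "\<not> (E y y' \<longleftrightarrow> E h h')"
    hence d: "E y y' \<noteq> E h h'" by auto
    have d2: "E y' y \<noteq> E h' h" using d Ecomm by auto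
    have hH: "h \<in> H" "h' \<in> H" and yV: "y \<in> V" "y' \<in> V" and yH: "y \<notin> H" "y' \<notin> H"
      using twinD tw tw' by auto
    show False
    proof (cases "k = 2")
      case False
      from FB_half[OF k tw tw' ne d] False have r1: "\<not> E y' h' \<and> rel h' h (E y y')" by auto
      from FB_half[OF k tw' tw ne[symmetric] d2] False have r2: "\<not> E y h" by auto
      from FB_final[OF tw tw' ne(2) r2 conjunct1[OF r1] conjunct2[OF r1]] show False using nomax by auto
    next
      case True
      interpret J: chs V "compl_edges V E" 2 a2 c2 by (rule co2[OF True])
      have Jtw: "J.twin y h" "J.twin y' h'"
        using twin_compl[OF co2[OF True] co2_H[OF True]] tw tw' by auto
      have hV: "h \<in> V" "h' \<in> V" using hH HV by auto
      have yh: "y \<noteq> h" "y' \<noteq> h'" "y \<noteq> h'" "y' \<noteq> h" using yH hH by auto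
      have cyy: "compl_edges V E y y' \<longleftrightarrow> \<not> E y y'" using cE[OF yV ne(2)] .
      have chh: "compl_edges V E h h' \<longleftrightarrow> \<not> E h h'" using cE[OF hV ne(1)] .
      have cyy': "compl_edges V E y' y \<longleftrightarrow> \<not> E y' y" using cE[OF yV(2,1) ne(2)[symmetric]] .
      have chh': "compl_edges V E h' h \<longleftrightarrow> \<not> E h' h" using cE[OF hV(2,1) ne(1)[symmetric]] .
      have cyh: "compl_edges V E y h \<longleftrightarrow> \<not> E y h" "compl_edges V E y' h' \<longleftrightarrow> \<not> E y' h'"
        using cE[OF yV(1) hV(1) yh(1)] cE[OF yV(2) hV(2) yh(2)] by auto
      have cd: "compl_edges V E y y' \<noteq> compl_edges V E h h'" using d cyy chh by auto
      have cd2: "compl_edges V E y' y \<noteq> compl_edges V E h' h" using d2 cyy' chh' by auto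
      have nm: "\<And>a' c'. \<not> chain_str V (compl_edges V E) (2+1) a' c'" using nomaxc True by auto
      have nm2: "\<And>a' c'. \<not> chain_str V E (2+1) a' c'" using nomax True by auto
      have k2: "(2::nat) \<le> 2" by simp
      show False
      proof (cases "E y h"; cases "E y' h'")
        assume a1: "E y h" and a2: "E y' h'"
        from J.FB_half[OF k2 Jtw(1) Jtw(2) ne cd] a2 cyh
        have r: "J.rel h' h (compl_edges V E y y')" by auto
        from J.FB_final[OF Jtw(1) Jtw(2) ne(2) _ _ r] a1 a2 cyh nm show False by auto
      next
        assume a1: "E y h" and a2: "\<not> E y' h'"
        from FB_half[OF k tw tw' ne d] a2 have r: "rel h' h (E y y')" by auto
        from J.FB_half[OF k2 Jtw(2) Jtw(1) ne[symmetric] cd2] a1 cyh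
        have r': "J.rel h h' (compl_edges V E y' y)" by auto
        have "J.rel h h' (\<not> E y y')" using r' cyy' Ecomm[of y' y] by auto
        thus False using k2_incompat[OF True r] by auto
      next
        assume a1: "\<not> E y h" and a2: "E y' h'"
        from FB_half[OF k tw' tw ne[symmetric] d2] a1 have r: "rel h h' (E y' y)" by auto
        from J.FB_half[OF k2 Jtw(1) Jtw(2) ne cd] a2 cyh
        have r': "J.rel h' h (compl_edges V E y y')" by auto
        have "J.rel h' h (\<not> E y' y)" using r' cyy Ecomm[of y' y] by auto
        thus False using k2_incompat[OF True r] by auto
      next
        assume a1: "\<not> E y h" and a2: "\<not> E y' h'"
        from FB_half[OF k tw tw' ne d] a2 have r: "rel h' h (E y y')" by auto
        from FB_final[OF tw tw' ne(2) a1 a2 r] nm2 True show False by auto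
      qed
    qed
  qed
  have cH2: "2 \<le> card H"
  proof -
    have "{a 1, c 1} \<subseteq> H" using aH cH k by auto
    moreover have "card {a 1, c 1} = 2" using ac_neq[of 1 1] k by auto
    moreover have "finite H" using HV finV finite_subset by auto
    ultimately show ?thesis by (metis card_mono)
  qed
  show False
  proof (cases "Out = {}")
    case False
    then obtain z0 where z0: "z0 \<in> Out" by auto
    show False
    proof (rule prime_no_hom[OF pr gr, of "H \<union> T"])
      show "H \<union> T \<subseteq> V" using HV TV by auto
      show "2 \<le> card (H \<union> T)"
      proof -
        have "finite (H \<union> T)" using HV TV finV finite_subset by auto
        thus ?thesis using cH2 card_mono[of "H \<union> T" H] by auto
      qed
      show "H \<union> T \<noteq> V" using z0 unfolding Out_def by auto
      fix b assume b: "b \<in> V - (H \<union> T)"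
      hence bO: "b \<in> Out" unfolding Out_def by auto
      have un: "E b x \<longleftrightarrow> E b h" if "x \<in> T" "twin x h" for x h using FA[OF bO that(2)] .
      from OutS[OF bO] show "(\<forall>x\<in>H \<union> T. E b x) \<or> (\<forall>x\<in>H \<union> T. \<not> E b x)"
      proof
        assume h: "\<forall>w\<in>H. E b w"
        have "\<forall>x\<in>H \<union> T. E b x"
        proof
          fix x assume "x \<in> H \<union> T"
          thus "E b x"
          proof
            assume "x \<in> H" thus ?thesis using h by auto
          next
            assume "x \<in> T"
            then obtain hx where "twin x hx" unfolding T_def by auto
            thus ?thesis using FA[OF bO] h twinD(3) by blast
          qed
        qed
        thus ?thesis by auto
      next
        assume h: "\<forall>w\<in>H. \<not> E b w"
        have "\<forall>x\<in>H \<union> T. \<not> E b x"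
        proof
          fix x assume "x \<in> H \<union> T"
          thus "\<not> E b x"
          proof
            assume "x \<in> H" thus ?thesis using h by auto
          next
            assume "x \<in> T"
            then obtain hx where "twin x hx" unfolding T_def by auto
            thus ?thesis using FA[OF bO] h twinD(3) by blast
          qed
        qed
        thus ?thesis by auto
      qed
    qed
  next
    case True
    have "V - H \<noteq> {}" using VH HV by auto
    then obtain y0 where y0: "y0 \<in> V - H" by auto
    hence "y0 \<in> T" using True unfolding Out_def by auto
    then obtain h where tw0: "twin y0 h" unfolding T_def by auto
    have hH: "h \<in> H" using twinD tw0 by auto
    define Sh where "Sh = insert h {y. twin y h}"
    show False
    proof (rule prime_no_hom[OF pr gr, of Sh])
      show "Sh \<subseteq> V" unfolding Sh_def using hH HV twinD(1) by auto
      show "2 \<le> card Sh"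
      proof -
        have "finite Sh" using \<open>Sh \<subseteq> V\<close> finV finite_subset by auto
        moreover have "{h, y0} \<subseteq> Sh" unfolding Sh_def using tw0 by auto
        moreover have "h \<noteq> y0" using twinD(2)[OF tw0] twinD(3)[OF tw0] by auto
        ultimately show ?thesis by (metis card_2_iff card_mono)
      qed
      show "Sh \<noteq> V"
      proof -
        obtain w where w: "w \<in> H" "w \<noteq> h" using H_two[OF _ hH] k by auto
        have "w \<notin> Sh" unfolding Sh_def using w twinD(2) by auto
        thus ?thesis using w HV by auto
      qed
      fix b assume b: "b \<in> V - Sh"
      show "(\<forall>x\<in>Sh. E b x) \<or> (\<forall>x\<in>Sh. \<not> E b x)"
      proof (cases "b \<in> H")
        case True
        have "b \<noteq> h" using b unfolding Sh_def by auto
        have "E b x \<longleftrightarrow> E b h" if "x \<in> Sh" for x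
        proof (cases "x = h")
          case True thus ?thesis by simp
        next
          case False
          hence "twin x h" using that unfolding Sh_def by auto
          thus ?thesis using twinD(4)[OF _ \<open>b \<in> H\<close> \<open>b \<noteq> h\<close>] Ecomm by blast
        qed
        thus ?thesis by blast
      next
        case False
        hence "b \<in> T" using b True unfolding Out_def by auto
        then obtain h'' where tb: "twin b h''" unfolding T_def by auto
        have "h'' \<noteq> h" using tb b unfolding Sh_def by auto
        have "E b x \<longleftrightarrow> E h'' h" if "x \<in> Sh" for x
        proof (cases "x = h")
          case True thus ?thesis using twinD(4)[OF tb hH] \<open>h'' \<noteq> h\<close> by auto
        next
          case False
          hence tx: "twin x h" using that unfolding Sh_def by auto
          have "x \<noteq> b" using that b by auto
          thus ?thesis using FB[OF tb tx \<open>h'' \<noteq> h\<close>] by auto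
        qed
        thus ?thesis by blast
      qed
    qed
  qed
qed

lemma half:
  assumes k: "1 \<le> k" and VH: "V = H"
  shows "half_graph V E"
proof -
  define f where "f = (\<lambda>x. case x of Inl i \<Rightarrow> a i | Inr j \<Rightarrow> c (k + 1 - j))"
  have fO: "f (Inl i) = a i" "f (Inr j) = c (k + 1 - j)" for i j unfolding f_def by auto
  have flip: "1 \<le> k + 1 - j" "k + 1 - j \<le> k" if "1 \<le> j" "j \<le> k" for j using that by auto
  have Ov: "x \<in> O_verts k \<longleftrightarrow> (\<exists>i. 1 \<le> i \<and> i \<le> k \<and> x = Inl i) \<or> (\<exists>j. 1 \<le> j \<and> j \<le> k \<and> x = Inr j)" for x
    unfolding O_verts_def by auto
  have inj: "inj_on f (O_verts k)"
  proof (rule inj_onI)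
    fix x y assume x: "x \<in> O_verts k" and y: "y \<in> O_verts k" and eq: "f x = f y"
    from x[unfolded Ov] y[unfolded Ov] show "x = y"
    proof (elim disjE exE conjE)
      fix i i' assume "1 \<le> i" "i \<le> k" "x = Inl i" "1 \<le> i'" "i' \<le> k" "y = Inl i'"
      thus ?thesis using eq fO a_inj by auto
    next
      fix i j assume h: "1 \<le> i" "i \<le> k" "x = Inl i" "1 \<le> j" "j \<le> k" "y = Inr j"
      thus ?thesis using eq fO ac_neq[of i "k + 1 - j"] flip[OF h(4,5)] by auto
    next
      fix i j assume h: "1 \<le> j" "j \<le> k" "x = Inr j" "1 \<le> i" "i \<le> k" "y = Inl i"
      thus ?thesis using eq fO ac_neq[of i "k + 1 - j"] flip[OF h(1,2)] by auto
    next
      fix j j' assume h: "1 \<le> j" "j \<le> k" "x = Inr j" "1 \<le> j'" "j' \<le> k" "y = Inr j'"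
      hence "c (k + 1 - j) = c (k + 1 - j')" using eq fO by auto
      hence "k + 1 - j = k + 1 - j'" using c_inj[of "k + 1 - j" "k + 1 - j'"] h flip[OF h(1,2)] flip[OF h(4,5)] by auto
      thus ?thesis using h by auto
    qed
  qed
  have img: "f ` O_verts k = V"
  proof
    show "f ` O_verts k \<subseteq> V"
    proof
      fix x assume "x \<in> f ` O_verts k"
      then obtain ov where o: "ov \<in> O_verts k" "x = f ov" by auto
      from o(1)[unfolded Ov] show "x \<in> V"
      proof (elim disjE exE conjE)
        fix i assume "1 \<le> i" "i \<le> k" "ov = Inl i" thus ?thesis using o fO aV by auto
      next
        fix j assume h: "1 \<le> j" "j \<le> k" "ov = Inr j" thus ?thesis using o fO cV[of "k + 1 - j"] flip[OF h(1,2)] by auto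
      qed
    qed
  next
    show "V \<subseteq> f ` O_verts k"
    proof
      fix x assume "x \<in> V"
      hence "x \<in> H" using VH by auto
      thus "x \<in> f ` O_verts k"
      proof (rule H_cases)
        fix u assume u: "1 \<le> u" "u \<le> k" "x = a u"
        hence "Inl u \<in> O_verts k" using Ov by auto
        thus ?thesis using u fO by (metis image_eqI)
      next
        fix u assume u: "1 \<le> u" "u \<le> k" "x = c u"
        hence "Inr (k + 1 - u) \<in> O_verts k" using Ov by auto
        moreover have "f (Inr (k + 1 - u)) = x" using u fO by auto
        ultimately show ?thesis by (metis image_eqI)
      qed
    qed
  qed
  have adj: "\<forall>x\<in>O_verts k. \<forall>y\<in>O_verts k. O_edges k x y \<longleftrightarrow> E (f x) (f y)"
  proof (intro ballI)
    fix x y assume x: "x \<in> O_verts k" and y: "y \<in> O_verts k"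
    have Oe: "O_edges k x y \<longleftrightarrow> (\<exists>i j. ((x = Inl i \<and> y = Inr j) \<or> (x = Inr j \<and> y = Inl i)) \<and> k + 1 \<le> i + j)"
      unfolding O_edges_def using x y by auto
    from x[unfolded Ov] y[unfolded Ov] show "O_edges k x y \<longleftrightarrow> E (f x) (f y)"
    proof (elim disjE exE conjE)
      fix i i' assume "1 \<le> i" "i \<le> k" "x = Inl i" "1 \<le> i'" "i' \<le> k" "y = Inl i'"
      thus ?thesis using Oe fO aa by auto
    next
      fix i j assume h: "1 \<le> i" "i \<le> k" "x = Inl i" "1 \<le> j" "j \<le> k" "y = Inr j"
      have "E (a i) (c (k + 1 - j)) \<longleftrightarrow> k + 1 - j \<le> i" using ac[of i "k + 1 - j"] h flip[OF h(4,5)] by auto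
      thus ?thesis using Oe fO h by auto
    next
      fix i j assume h: "1 \<le> j" "j \<le> k" "x = Inr j" "1 \<le> i" "i \<le> k" "y = Inl i"
      have "E (c (k + 1 - j)) (a i) \<longleftrightarrow> k + 1 - j \<le> i" using ca[of i "k + 1 - j"] h flip[OF h(1,2)] by auto
      thus ?thesis using Oe fO h by auto
    next
      fix j j' assume h: "1 \<le> j" "j \<le> k" "x = Inr j" "1 \<le> j'" "j' \<le> k" "y = Inr j'"
      thus ?thesis using Oe fO cc[of "k + 1 - j" "k + 1 - j'"] flip[OF h(1,2)] flip[OF h(4,5)] by auto
    qed
  qed
  have "graph_iso (O_verts k) (O_edges k) V E f"
    unfolding graph_iso_def bij_betw_def using inj img adj by auto
  thus ?thesis unfolding half_graph_def using k by blast
qed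

end

lemma chain_bound:
  assumes "chain_str V E k a c" "finite V" shows "k \<le> card V"
proof -
  have "inj_on a {1..k}" "a ` {1..k} \<subseteq> V" using assms(1) unfolding chain_str_def by auto
  hence "card {1..k} \<le> card V" using card_inj_on_le assms(2) by blast
  thus ?thesis by simp
qed

theorem lemma4p3:
  fixes V :: "'a set" and E :: "'a \<Rightarrow> 'a \<Rightarrow> bool"
  assumes "graph V E"
    and "prime_graph V E"
    and "free_P5_coP5_C5_bull V E"
  shows "half_graph V E \<or> half_graph V (compl_edges V E)"
proof -
  interpret G: fgraph V E using assms(1,3) unfolding fgraph_def by blast
  obtain w1 w2 w3 w4 where p: "p4 V E w1 w2 w3 w4" using prime_has_p4 assms(1,2) by blast
  define K where "K = {k. \<exists>a c. chain_str V E k a c \<or> chain_str V (compl_edges V E) k a c}"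
  have bound: "k \<le> card V" if "k \<in> K" for k
    using that chain_bound G.finV unfolding K_def by blast
  have finK: "finite K" using bound by (meson finite_nat_set_iff_bounded_le)
  have c2: "chain_str V E 2 (\<lambda>i. if i = 1 then w1 else w3) (\<lambda>i. if i = 1 then w2 else w4)"
  proof -
    have two: "{1..2::nat} = {1,2}" by auto
    have e: "E w2 w1" "E w3 w2" "E w4 w3" "\<not> E w3 w1" "\<not> E w4 w1" "\<not> E w4 w2"
      using p unfolding p4_def using G.Ecomm by auto
    show ?thesis unfolding chain_str_def two inj_on_def using p e unfolding p4_def by auto
  qed
  hence "2 \<in> K" unfolding K_def by blast
  define m where "m = Max K"
  have mK: "m \<in> K" using Max_in[OF finK] \<open>2 \<in> K\<close> unfolding m_def by auto
  have m2: "2 \<le> m" using Max_ge[OF finK \<open>2 \<in> K\<close>] unfolding m_def by auto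
  have nm: "m + 1 \<notin> K" using Max_ge[OF finK, of "m+1"] unfolding m_def by auto
  hence nomax: "\<And>a' c'. \<not> chain_str V E (m+1) a' c'" "\<And>a' c'. \<not> chain_str V (compl_edges V E) (m+1) a' c'"
    unfolding K_def by auto
  from mK obtain a c where ac: "chain_str V E m a c \<or> chain_str V (compl_edges V E) m a c"
    unfolding K_def by blast
  thus ?thesis
  proof
    assume ch: "chain_str V E m a c"
    interpret C: chs V E m a c unfolding chs_def chs_axioms_def using G.fgraph_axioms ch by blast
    have "V = C.H" by (rule C.main_lemma[OF m2 assms(2) nomax])
    hence "half_graph V E" using C.half m2 by auto
    thus ?thesis by blast
  next
    assume ch: "chain_str V (compl_edges V E) m a c"
    interpret C: chs V "compl_edges V E" m a c
      unfolding chs_def chs_axioms_def using G.compl_fgraph ch by blast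
    have cc: "compl_edges V (compl_edges V E) = E" using compl_compl[OF assms(1)] .
    have "V = C.H" by (rule C.main_lemma[OF m2 compl_prime[OF assms(1,2)] nomax(2)]) (use nomax(1) cc in auto)
    hence "half_graph V (compl_edges V E)" using C.half m2 by auto
    thus ?thesis by blast
  qed
qed


end
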